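(* Let $U=\{(\tau,R):\tau\in\mathbb{R}^d,\ R\in O(d),\ \|R-I_d\|_2<\sqrt2\}$. For $(\tau,R)\in U$, there is a unique real skew-symmetric matrix $B$ whose eigenvalues $\pm i\theta_j$ satisfy $|\theta_j|<\pi$ and $e^{B}=R$; moreover $\|B\|_2\le\pi/2$, the matrix $J(B):=\sum_{k\ge0}\frac{B^k}{(k+1)!}$ is invertible, and with $\tau_0':=J(B)^{-1}\tau$ one has \[ \|R-I_d\|_2+\|\tau\|_2\;\le\;\|B\|_2+\|\tau_0'\|_2\;\le\;\frac{\pi}{2}\bigl(\|R-I_d\|_2+\|\tau\|_2\bigr). \]
   Context: $\|\cdot\|_2$ denotes the Euclidean norm on vectors and the operator (spectral) norm on matrices. $O(d)$ is the orthogonal group. With the pair $(\tau,R)$ identified with the Euclidean motion $x\mapsto Rx+\tau$, one has $\exp$ of the Lie algebra element $(\tau_0',B)$ equal to $(J(B)\tau_0', e^B)$. *)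

theory Defs
  imports "HOL-Analysis.Analysis"
begin

definition opnorm2 :: "real^'n^'n \<Rightarrow> real" where
  "opnorm2 A = onorm (\<lambda>x. A *v x)"

definition mpow :: "real^'n^'n \<Rightarrow> nat \<Rightarrow> real^'n^'n" where
  "mpow A k = (((**) A) ^^ k) (mat 1)"

definition mexp :: "real^'n^'n \<Rightarrow> real^'n^'n" where
  "mexp A = (\<Sum>k. (1 / fact k) *\<^sub>R mpow A k)"

definition Jmat :: "real^'n^'n \<Rightarrow> real^'n^'n" where
  "Jmat B = (\<Sum>k. (1 / fact (k + 1)) *\<^sub>R mpow B k)"

definition skew_symmetric :: "real^'n^'n \<Rightarrow> bool" where
  "skew_symmetric B \<longleftrightarrow> transpose B = - B"

definition cmat :: "real^'n^'n \<Rightarrow> complex^'n^'n" where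
  "cmat A = (\<chi> i j. complex_of_real (A $ i $ j))"

definition is_eigenvalue :: "real^'n^'n \<Rightarrow> complex \<Rightarrow> bool" where
  "is_eigenvalue A z \<longleftrightarrow> det (cmat A - mat z) = 0"

end

theory Submission
  imports Defs
begin

lemma neg_mv: "(- A) *v x = - ((A::real^'n^'n) *v x)"
  by (simp add: vec_eq_iff matrix_vector_mult_def sum_negf)

lemma dot_transpose: "(transpose A *v x) \<bullet> y = x \<bullet> ((A::real^'n^'n) *v y)"
  by (simp add: transpose_matrix_vector dot_lmul_matrix)

lemma sym_dot: "transpose A = (A::real^'n^'n) \<Longrightarrow> (A *v x) \<bullet> y = x \<bullet> (A *v y)"
  using dot_transpose[of A x y] by simp

lemma skew_dot: "transpose B = - (B::real^'n^'n) \<Longrightarrow> (B *v x) \<bullet> y = - (x \<bullet> (B *v y))"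
  using dot_transpose[of B x y] by (simp add: neg_mv)

lemma skew_self: "transpose B = - (B::real^'n^'n) \<Longrightarrow> x \<bullet> (B *v x) = 0"
  using skew_dot[of B x x] by (simp add: inner_commute)

lemma quad_zero:
  fixes a b :: real
  assumes "\<And>t. 2*t*a + t^2*b \<le> 0" "a \<ge> 0"
  shows "a = 0"
proof (rule ccontr)
  assume "a \<noteq> 0" hence a: "a > 0" using assms by auto
  define t where "t = a / (\<bar>b\<bar> + 1)"
  have t: "t > 0" using a by (simp add: t_def add_pos_nonneg)
  have ta: "t * (\<bar>b\<bar> + 1) = a" unfolding t_def by simp
  have "t^2 * (-\<bar>b\<bar>) \<le> t^2*b"
    by (rule mult_left_mono) auto
  hence "2*t*a + t^2*b \<ge> t * (2*a - t*\<bar>b\<bar>)" by (simp add: power2_eq_square algebra_simps)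
  moreover have "2*a - t*\<bar>b\<bar> \<ge> a" using ta t by (simp add: algebra_simps)
  hence "t * (2*a - t*\<bar>b\<bar>) > 0" using a t by (simp add: mult_pos_pos)
  ultimately show False using assms(1)[of t] by simp
qed
lemma quad_aux:
  fixes Q N m t zz p q :: real
  shows "Q \<le> m*N \<Longrightarrow> Q = m + 2*t*zz + 2*t*m*p + t^2*q \<Longrightarrow> N = 1 + 2*t*p + t^2*zz \<Longrightarrow> 2*t*zz + t^2*(q - m*zz) \<le> 0"
  by (simp add: algebra_simps)

lemma eigen_from_max:
  fixes A :: "real^'n^'n"
  assumes sym: "transpose A = A" and S: "subspace S" and inv: "\<And>x. x \<in> S \<Longrightarrow> A *v x \<in> S"
    and v: "v \<in> S" "norm v = 1"
    and mx: "\<And>w. w \<in> S \<Longrightarrow> norm w = 1 \<Longrightarrow> w \<bullet> (A *v w) \<le> v \<bullet> (A *v v)"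
  shows "A *v v = (v \<bullet> (A *v v)) *\<^sub>R v"
proof -
  define m where "m = v \<bullet> (A *v v)"
  have gen: "w \<bullet> (A *v w) \<le> m * (w \<bullet> w)" if "w \<in> S" for w
  proof (cases "w = 0")
    case True then show ?thesis by simp
  next
    case False
    let ?u = "(1 / norm w) *\<^sub>R w"
    have "?u \<in> S" using that S by (simp add: subspace_scale)
    moreover have "norm ?u = 1" using False by simp
    ultimately have "?u \<bullet> (A *v ?u) \<le> m" using mx m_def by blast
    hence "(1 / norm w)^2 * (w \<bullet> (A *v w)) \<le> m"
      by (simp add: matrix_vector_mult_scaleR power2_eq_square)
    moreover have "w \<bullet> w = (norm w)^2" by (simp add: power2_norm_eq_inner)
    moreover have "norm w > 0" using False by simp
    ultimately show ?thesis by (simp add: field_simps)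
  qed
  define z where "z = A *v v - m *\<^sub>R v"
  have zS: "z \<in> S" unfolding z_def using inv[OF v(1)] v(1) S by (simp add: subspace_diff subspace_scale)
  have vv: "v \<bullet> v = 1" using v(2) by (simp add: norm_eq_1)
  have key: "2*t*(z \<bullet> z) + t^2*(z \<bullet> (A *v z) - m * (z \<bullet> z)) \<le> 0" for t
  proof -
    define w where "w = v + t *\<^sub>R z"
    have wS: "w \<in> S" using zS v(1) S unfolding w_def by (simp add: subspace_add subspace_scale)
    have E1: "w \<bullet> (A *v w) \<le> m * (w \<bullet> w)"
      using gen[OF wS] .
    have zAv: "z \<bullet> (A *v v) = z \<bullet> z + m * (v \<bullet> z)"
      unfolding z_def by (simp add: inner_diff_left inner_diff_right inner_commute algebra_simps)
    have vAz: "v \<bullet> (A *v z) = z \<bullet> (A *v v)"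
      using sym_dot[OF sym, of z v] by (simp add: inner_commute)
    have "w \<bullet> (A *v w) =
        v \<bullet> (A *v v) + t * (v \<bullet> (A *v z)) + t * (z \<bullet> (A *v v)) + t^2 * (z \<bullet> (A *v z))"
      unfolding w_def
      by (simp add: matrix_vector_right_distrib matrix_vector_mult_scaleR inner_add_left inner_add_right power2_eq_square algebra_simps)
    hence E2: "w \<bullet> (A *v w) = m + 2*t*(z \<bullet> z) + 2*t*m*(v \<bullet> z) + t^2 * (z \<bullet> (A *v z))"
      unfolding vAz zAv m_def by (simp add: algebra_simps)
    have "w \<bullet> w = v \<bullet> v + t * (v \<bullet> z) + t * (z \<bullet> v) + t^2 * (z \<bullet> z)"
      unfolding w_def by (simp add: inner_add_left inner_add_right power2_eq_square algebra_simps)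
    hence E3: "w \<bullet> w = 1 + 2*t*(v \<bullet> z) + t^2 * (z \<bullet> z)"
      using vv by (simp add: inner_commute)
    show ?thesis by (rule quad_aux[OF E1 E2 E3])
  qed
  have "z \<bullet> z = 0" by (rule quad_zero[OF key]) simp
  hence "z = 0" by simp
  thus ?thesis unfolding z_def m_def by simp
qed


lemma spectral_sub:
  fixes A :: "real^'n^'n"
  assumes sym: "transpose A = A"
  shows "subspace S \<Longrightarrow> (\<forall>x\<in>S. A *v x \<in> S) \<Longrightarrow> dim S = k \<Longrightarrow>
    \<exists>T. T \<subseteq> S \<and> pairwise orthogonal T \<and> (\<forall>v\<in>T. norm v = 1 \<and> A *v v = (v \<bullet> (A *v v)) *\<^sub>R v) \<and> span T = S"
proof (induction k arbitrary: S)
  case 0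
  then have "S \<subseteq> {0}" by (simp add: dim_eq_0)
  hence "S = {0}" using 0 subspace_0 by auto
  thus ?case by (intro exI[of _ "{}"]) auto
next
  case (Suc k)
  have S: "subspace S" and inv: "\<And>x. x \<in> S \<Longrightarrow> A *v x \<in> S" using Suc.prems by auto
  obtain x where x: "x \<in> S" "x \<noteq> 0"
    using Suc.prems(3) dim_eq_0[of S] by auto
  define K where "K = sphere (0::real^'n) 1 \<inter> S"
  have Kc: "compact K" unfolding K_def by (rule compact_Int_closed[OF compact_sphere closed_subspace[OF S]])
  have "(1 / norm x) *\<^sub>R x \<in> K" unfolding K_def using x S by (simp add: subspace_scale)
  hence Kne: "K \<noteq> {}" by auto
  have cont: "continuous_on K (\<lambda>w. w \<bullet> (A *v w))"
    by (intro continuous_intros linear_continuous_on matrix_vector_mul_bounded_linear)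
  obtain v where v: "v \<in> K" and vmax: "\<And>w. w \<in> K \<Longrightarrow> w \<bullet> (A *v w) \<le> v \<bullet> (A *v v)"
    using continuous_attains_sup[OF Kc Kne cont] by blast
  have vS: "v \<in> S" and vn: "norm v = 1" using v unfolding K_def by auto
  have ev: "A *v v = (v \<bullet> (A *v v)) *\<^sub>R v"
    by (rule eigen_from_max[OF sym S inv vS vn]) (use vmax in \<open>auto simp: K_def\<close>)
  have vv: "v \<bullet> v = 1" using vn by (simp add: norm_eq_1)
  define S' where "S' = S \<inter> {y. orthogonal v y}"
  have S'sub: "subspace S'" unfolding S'_def using subspace_inter[OF S subspace_orthogonal_to_vector[of v]] by simp
  have S'inv: "\<forall>y\<in>S'. A *v y \<in> S'"
  proof
    fix y assume y: "y \<in> S'"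
    have "v \<bullet> (A *v y) = (A *v v) \<bullet> y" using sym_dot[OF sym, of v y] by simp
    also have "\<dots> = 0" using y by (subst ev) (simp add: S'_def orthogonal_def)
    finally show "A *v y \<in> S'" using y inv unfolding S'_def by (auto simp: orthogonal_def)
  qed
  have vnot: "v \<notin> span S'"
  proof
    assume "v \<in> span S'"
    hence "v \<in> S'" using S'sub by (metis span_eq_iff)
    thus False using vv unfolding S'_def by (auto simp: orthogonal_def)
  qed
  have spanS: "span (insert v S') = S"
  proof
    show "span (insert v S') \<subseteq> S"
      using vS S by (intro span_minimal) (auto simp: S'_def)
  next
    show "S \<subseteq> span (insert v S')"
    proof
      fix y assume y: "y \<in> S"
      have d: "y - (v \<bullet> y) *\<^sub>R v \<in> S'"
        unfolding S'_def using y vS S vv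
        by (auto simp: orthogonal_def inner_diff_right subspace_diff subspace_scale)
      have "y = (v \<bullet> y) *\<^sub>R v + (y - (v \<bullet> y) *\<^sub>R v)" by simp
      also have "\<dots> \<in> span (insert v S')"
        by (intro span_add span_scale) (use d in \<open>auto intro: span_base\<close>)
      finally show "y \<in> span (insert v S')" .
    qed
  qed
  have "dim S = dim S' + 1"
    using spanS dim_span[of "insert v S'"] dim_insert[of v S'] vnot by simp
  hence dS': "dim S' = k" using Suc.prems(3) by simp
  obtain T' where T': "T' \<subseteq> S'" "pairwise orthogonal T'"
      "\<forall>w\<in>T'. norm w = 1 \<and> A *v w = (w \<bullet> (A *v w)) *\<^sub>R w" "span T' = S'"
    using Suc.IH[OF S'sub S'inv dS'] by blast
  show ?case
  proof (intro exI[of _ "insert v T'"] conjI)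
    show "insert v T' \<subseteq> S" using T'(1) vS unfolding S'_def by auto
    show "pairwise orthogonal (insert v T')"
      using T'(1,2) unfolding pairwise_insert S'_def by (auto simp: orthogonal_commute)
    show "\<forall>w\<in>insert v T'. norm w = 1 \<and> A *v w = (w \<bullet> (A *v w)) *\<^sub>R w"
      using T'(3) vn ev by auto
    show "span (insert v T') = S"
    proof
      show "span (insert v T') \<subseteq> S"
        using vS S T'(1) by (intro span_minimal) (auto simp: S'_def)
      have "insert v S' \<subseteq> span (insert v T')"
        using T'(4) span_mono[of T' "insert v T'"] by (auto intro: span_base)
      hence "span (insert v S') \<subseteq> span (insert v T')"
        by (intro span_minimal) auto
      thus "S \<subseteq> span (insert v T')" using spanS by simp
    qed
  qed
qed

lemma spectral_sym:
  fixes A :: "real^'n^'n"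
  assumes sym: "transpose A = A"
  obtains T where "finite T" "pairwise orthogonal T" "\<And>v. v \<in> T \<Longrightarrow> norm v = 1" "span T = UNIV"
    "\<And>v. v \<in> T \<Longrightarrow> A *v v = (v \<bullet> (A *v v)) *\<^sub>R v"
proof -
  obtain T where T: "pairwise orthogonal T" "\<forall>v\<in>T. norm v = 1 \<and> A *v v = (v \<bullet> (A *v v)) *\<^sub>R v"
      "span T = UNIV"
    using spectral_sub[OF sym subspace_UNIV, of "dim (UNIV::(real^'n) set)"] by auto
  have "0 \<notin> T" using T(2) by fastforce
  hence "independent T" using pairwise_orthogonal_independent T(1) by blast
  hence "finite T" using finiteI_independent by blast
  thus ?thesis using that T by blast
qed



lemma eig_orth:
  fixes P :: "real^'n^'n"
  assumes "transpose P = P" "P *v y = \<mu> *\<^sub>R y" "P *v z = \<nu> *\<^sub>R z" "\<mu> \<noteq> \<nu>"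
  shows "y \<bullet> z = 0"
proof -
  have "\<mu> * (y \<bullet> z) = (P *v y) \<bullet> z" using assms(2) by simp
  also have "\<dots> = y \<bullet> (P *v z)" by (rule sym_dot[OF assms(1)])
  also have "\<dots> = \<nu> * (y \<bullet> z)" using assms(3) by simp
  finally show ?thesis using assms(4) by simp
qed

lemma onb_coeff:
  assumes "finite T" "pairwise orthogonal T" "\<And>v. v \<in> T \<Longrightarrow> norm v = 1" "w \<in> T"
  shows "w \<bullet> (\<Sum>v\<in>T. a v *\<^sub>R v) = a w"
proof -
  have "w \<bullet> (\<Sum>v\<in>T. a v *\<^sub>R v) = (\<Sum>v\<in>T. a v * (w \<bullet> v))" by (simp add: inner_sum_right)
  also have "\<dots> = a w * (w \<bullet> w) + (\<Sum>v\<in>T - {w}. a v * (w \<bullet> v))"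
    using assms(1,4) by (simp add: sum.remove)
  also have "(\<Sum>v\<in>T - {w}. a v * (w \<bullet> v)) = 0"
    using assms(2,4) by (intro sum.neutral) (auto simp: pairwise_def orthogonal_def)
  also have "w \<bullet> w = 1" using assms(3)[OF assms(4)] by (simp add: norm_eq_1)
  finally show ?thesis by simp
qed

lemma eig_decomp:
  fixes P :: "real^'n^'n"
  assumes "transpose P = P"
  shows "\<exists>M y. finite M \<and> x = (\<Sum>\<mu>\<in>M. y \<mu>) \<and> (\<forall>\<mu>\<in>M. P *v y \<mu> = \<mu> *\<^sub>R y \<mu>)"
proof -
  obtain T where T: "finite T" "pairwise orthogonal T" "\<And>v. v \<in> T \<Longrightarrow> norm v = 1" "span T = UNIV"
    "\<And>v. v \<in> T \<Longrightarrow> P *v v = (v \<bullet> (P *v v)) *\<^sub>R v"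
    using spectral_sym[OF assms] by blast
  define lam where "lam v = v \<bullet> (P *v v)" for v
  define y where "y \<mu> = (\<Sum>v\<in>{v\<in>T. lam v = \<mu>}. (x \<bullet> v) *\<^sub>R v)" for \<mu>
  have "x = (\<Sum>v\<in>T. (x \<bullet> v) *\<^sub>R v)" using orthonormal_basis_expand[of T x] T by auto
  also have "\<dots> = (\<Sum>\<mu>\<in>lam`T. y \<mu>)" unfolding y_def by (rule sum.group[symmetric]) (use T in auto)
  finally have x: "x = (\<Sum>\<mu>\<in>lam`T. y \<mu>)" .
  have ev: "P *v y \<mu> = \<mu> *\<^sub>R y \<mu>" for \<mu>
  proof -
    have "P *v y \<mu> = (\<Sum>v\<in>{v\<in>T. lam v = \<mu>}. (x \<bullet> v) *\<^sub>R (P *v v))"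
      unfolding y_def by (simp add: vec.sum matrix_vector_mult_scaleR)
    also have "\<dots> = (\<Sum>v\<in>{v\<in>T. lam v = \<mu>}. \<mu> *\<^sub>R ((x \<bullet> v) *\<^sub>R v))"
    proof (intro sum.cong refl)
      fix v assume "v \<in> {v\<in>T. lam v = \<mu>}"
      hence vT: "v \<in> T" and lv: "lam v = \<mu>" by auto
      have "P *v v = lam v *\<^sub>R v" unfolding lam_def by (rule T(5)[OF vT])
      thus "(x \<bullet> v) *\<^sub>R (P *v v) = \<mu> *\<^sub>R ((x \<bullet> v) *\<^sub>R v)" using lv by simp
    qed
    also have "\<dots> = \<mu> *\<^sub>R y \<mu>" unfolding y_def by (simp add: scaleR_sum_right)
    finally show ?thesis .
  qed
  show ?thesis using x ev T(1) by blast
qed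

lemma compare_norm:
  fixes P F G :: "real^'n^'n"
  assumes sym: "transpose P = P" and c: "0 \<le> c"
    and H: "\<And>y \<mu>. P *v y = \<mu> *\<^sub>R y \<Longrightarrow> P *v (F *v y) = \<mu> *\<^sub>R (F *v y) \<and>
         P *v (G *v y) = \<mu> *\<^sub>R (G *v y) \<and> norm (F *v y) \<le> c * norm (G *v y)"
  shows "norm (F *v x) \<le> c * norm (G *v x)"
proof -
  obtain M y where M: "finite M" "x = (\<Sum>\<mu>\<in>M. y \<mu>)" "\<And>\<mu>. \<mu> \<in> M \<Longrightarrow> P *v y \<mu> = \<mu> *\<^sub>R y \<mu>"
    using eig_decomp[OF sym, of x] by blast
  have orth: "pairwise (\<lambda>\<mu> \<nu>. orthogonal (Q *v y \<mu>) (Q *v y \<nu>)) M"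
    if hQ: "\<And>\<mu>. \<mu> \<in> M \<Longrightarrow> P *v (Q *v y \<mu>) = \<mu> *\<^sub>R (Q *v y \<mu>)" for Q
  proof (unfold pairwise_def orthogonal_def, intro ballI impI)
    fix \<mu> \<nu> assume "\<mu> \<in> M" "\<nu> \<in> M" "\<mu> \<noteq> \<nu>"
    then show "(Q *v y \<mu>) \<bullet> (Q *v y \<nu>) = 0" by (intro eig_orth[OF sym hQ hQ])
  qed
  have oF: "pairwise (\<lambda>\<mu> \<nu>. orthogonal (F *v y \<mu>) (F *v y \<nu>)) M"
    by (rule orth) (use H M(3) in blast)
  have oG: "pairwise (\<lambda>\<mu> \<nu>. orthogonal (G *v y \<mu>) (G *v y \<nu>)) M"
    by (rule orth) (use H M(3) in blast)
  have "(norm (F *v x))^2 = (\<Sum>\<mu>\<in>M. (norm (F *v y \<mu>))^2)"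
    unfolding M(2) vec.sum by (rule norm_sum_Pythagorean[OF M(1) oF])
  also have "\<dots> \<le> (\<Sum>\<mu>\<in>M. (c * norm (G *v y \<mu>))^2)"
    by (intro sum_mono power_mono) (use H M(3) in auto)
  also have "\<dots> = c^2 * (\<Sum>\<mu>\<in>M. (norm (G *v y \<mu>))^2)"
    by (simp add: power_mult_distrib sum_distrib_left)
  also have "(\<Sum>\<mu>\<in>M. (norm (G *v y \<mu>))^2) = (norm (G *v x))^2"
    unfolding M(2) vec.sum by (rule norm_sum_Pythagorean[OF M(1) oG, symmetric])
  finally have sq: "(norm (F *v x))^2 \<le> (c * norm (G *v x))^2" by (simp add: power_mult_distrib)
  show ?thesis by (rule power2_le_imp_le[OF sq]) (simp add: c)
qed



lemma mpow_0[simp]: "mpow B 0 = mat 1" by (simp add: mpow_def)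
lemma mpow_Suc: "mpow B (Suc k) = B ** mpow B k" by (simp add: mpow_def)
lemma mpow_Suc_v: "mpow B (Suc k) *v x = B *v (mpow B k *v x)"
  by (simp add: mpow_Suc matrix_vector_mul_assoc)

lemma mv_bound: "norm (A *v x) \<le> opnorm2 A * norm x"
  unfolding opnorm2_def by (rule onorm[OF matrix_vector_mul_bounded_linear])

lemma opnorm2_nonneg: "0 \<le> opnorm2 A"
  unfolding opnorm2_def by (rule onorm_pos_le[OF matrix_vector_mul_bounded_linear])

lemma opnorm2_le: "0 \<le> b \<Longrightarrow> (\<And>x. norm (A *v x) \<le> b * norm x) \<Longrightarrow> opnorm2 A \<le> b"
  unfolding opnorm2_def by (rule onorm_bound)

lemma mpow_bound: "norm (mpow B k *v x) \<le> opnorm2 B ^ k * norm x"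
proof (induction k)
  case 0 then show ?case by simp
next
  case (Suc k)
  have "norm (mpow B (Suc k) *v x) \<le> opnorm2 B * norm (mpow B k *v x)"
    unfolding mpow_Suc_v by (rule mv_bound)
  also have "\<dots> \<le> opnorm2 B * (opnorm2 B ^ k * norm x)"
    by (rule mult_left_mono[OF Suc.IH opnorm2_nonneg])
  finally show ?case by (simp add: mult.assoc)
qed

lemma mat_entry_bound:
  fixes A :: "real^'n^'n"
  assumes "\<And>x. norm (A *v x) \<le> b * norm x"
  shows "\<bar>A $ i $ j\<bar> \<le> b"
proof -
  have "(A *v axis j 1) $ i = A $ i $ j"
    by (simp add: matrix_vector_mult_def axis_def if_distrib cong: if_cong)
  hence "\<bar>A $ i $ j\<bar> \<le> norm (A *v axis j 1)" by (metis component_le_norm_cart)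
  also have "\<dots> \<le> b * norm (axis j (1::real))" by (rule assms)
  finally show ?thesis by (simp add: norm_axis_1)
qed

lemma mat_norm_bound:
  fixes A :: "real^'n^'n"
  assumes "\<And>x. norm (A *v x) \<le> b * norm x"
  shows "norm A \<le> real CARD('n) * real CARD('n) * b"
proof -
  have "norm A \<le> (\<Sum>i\<in>UNIV. norm (A $ i))"
    unfolding norm_vec_def by (rule L2_set_le_sum) simp
  also have "\<dots> \<le> (\<Sum>i\<in>(UNIV::'n set). \<Sum>j\<in>(UNIV::'n set). \<bar>A $ i $ j\<bar>)"
    by (intro sum_mono norm_le_l1_cart)
  also have "\<dots> \<le> (\<Sum>i\<in>(UNIV::'n set). \<Sum>j\<in>(UNIV::'n set). b)"
    by (intro sum_mono mat_entry_bound assms)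
  also have "\<dots> = real CARD('n) * real CARD('n) * b" by simp
  finally show ?thesis .
qed

lemma mpow_norm: "norm (mpow B k) \<le> real CARD('n) * real CARD('n) * opnorm2 (B::real^'n^'n) ^ k"
  by (rule mat_norm_bound[OF mpow_bound])

lemma mseries_summable:
  fixes B :: "real^'n^'n"
  assumes c: "\<And>k. \<bar>c k\<bar> \<le> 1 / fact k"
  shows "summable (\<lambda>k. c k *\<^sub>R mpow B k)"
proof (rule summable_comparison_test[OF exI[of _ 0]])
  let ?N = "real CARD('n) * real CARD('n)"
  show "summable (\<lambda>k. ?N * (inverse (fact k) * opnorm2 B ^ k))"
    by (intro summable_mult summable_exp)
  show "\<forall>k\<ge>0. norm (c k *\<^sub>R mpow B k) \<le> ?N * (inverse (fact k) * opnorm2 B ^ k)"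
  proof (intro allI impI)
    fix k :: nat
    have "norm (c k *\<^sub>R mpow B k) = \<bar>c k\<bar> * norm (mpow B k)" by simp
    also have "\<dots> \<le> (1 / fact k) * (?N * opnorm2 B ^ k)"
      by (intro mult_mono c mpow_norm) auto
    finally show "norm (c k *\<^sub>R mpow B k) \<le> ?N * (inverse (fact k) * opnorm2 B ^ k)"
      by (simp add: field_simps)
  qed
qed

lemma linear_mv_left: "linear (\<lambda>A::real^'n^'m. A *v y)"
  by (intro linearI) (simp_all add: matrix_vector_mult_add_rdistrib scaleR_matrix_vector_assoc)

lemma mseries_apply:
  fixes B :: "real^'n^'n"
  assumes "summable (\<lambda>k. c k *\<^sub>R mpow B k)"
  shows "(\<Sum>k. c k *\<^sub>R mpow B k) *v y = (\<Sum>k. c k *\<^sub>R (mpow B k *v y))"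
proof -
  have bl: "bounded_linear (\<lambda>A::real^'n^'n. A *v y)"
    using linear_mv_left linear_conv_bounded_linear by blast
  show ?thesis
    using bounded_linear.suminf[OF bl assms] by (simp add: scaleR_matrix_vector_assoc)
qed

lemma rot_pow:
  fixes B :: "real^'n^'n"
  assumes "B *v y = s *\<^sub>R u" "B *v u = (- s) *\<^sub>R y"
  shows "mpow B k *v y = Re ((\<i> * of_real s)^k) *\<^sub>R y + Im ((\<i> * of_real s)^k) *\<^sub>R u"
proof (induction k)
  case 0 then show ?case by simp
next
  case (Suc k)
  show ?case
    unfolding mpow_Suc_v Suc.IH
    by (simp add: matrix_vector_right_distrib matrix_vector_mult_scaleR assms algebra_simps)
qed

lemma rot_series:
  fixes B :: "real^'n^'n"
  assumes rot: "B *v y = s *\<^sub>R u" "B *v u = (- s) *\<^sub>R y"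
    and sm: "summable (\<lambda>k. c k *\<^sub>R mpow B k)"
    and w: "(\<lambda>k. of_real (c k) * (\<i> * of_real s)^k) sums w"
  shows "(\<Sum>k. c k *\<^sub>R mpow B k) *v y = Re w *\<^sub>R y + Im w *\<^sub>R u"
proof -
  have "(\<lambda>k. Re (of_real (c k) * (\<i> * of_real s)^k) *\<^sub>R y + Im (of_real (c k) * (\<i> * of_real s)^k) *\<^sub>R u)
          sums (Re w *\<^sub>R y + Im w *\<^sub>R u)"
    by (intro sums_add sums_scaleR_left sums_Re sums_Im w)
  moreover have "(\<lambda>k. Re (of_real (c k) * (\<i> * of_real s)^k) *\<^sub>R y + Im (of_real (c k) * (\<i> * of_real s)^k) *\<^sub>R u)
      = (\<lambda>k. c k *\<^sub>R (mpow B k *v y))"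
    by (rule ext) (simp add: rot_pow[OF rot] scaleR_add_right)
  ultimately have "(\<lambda>k. c k *\<^sub>R (mpow B k *v y)) sums (Re w *\<^sub>R y + Im w *\<^sub>R u)" by simp
  thus ?thesis using mseries_apply[OF sm] sums_unique by metis
qed

lemma exp_sums_c: "(\<lambda>k. complex_of_real (1 / fact k) * z^k) sums exp z"
proof -
  have "(\<lambda>k. complex_of_real (1 / fact k) * z^k) = (\<lambda>n. z^n /\<^sub>R fact n)"
    by (rule ext) (simp add: scaleR_conv_of_real divide_inverse mult.commute)
  thus ?thesis using exp_converges[of z] by simp
qed

definition jfun :: "complex \<Rightarrow> complex" where
  "jfun z = (if z = 0 then 1 else (exp z - 1) / z)"

lemma j_sums_c: "(\<lambda>k. complex_of_real (1 / fact (k + 1)) * z^k) sums jfun z"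
proof (cases "z = 0")
  case True
  have "(\<lambda>k. complex_of_real (1 / fact (k + 1)) * 0^k) sums complex_of_real (1 / fact (0 + 1))"
    by (rule powser_sums_zero)
  thus ?thesis using True by (simp add: jfun_def)
next
  case False
  have "(\<lambda>n. z^(Suc n) /\<^sub>R fact (Suc n)) sums (exp z - z^0 /\<^sub>R fact 0)"
    using exp_converges[of z] sums_Suc_iff[of "\<lambda>n. z^n /\<^sub>R fact n"] by simp
  hence "(\<lambda>n. z^(Suc n) /\<^sub>R fact (Suc n) / z) sums ((exp z - 1) / z)"
    using sums_divide by fastforce
  moreover have "(\<lambda>n. z^(Suc n) /\<^sub>R fact (Suc n) / z) = (\<lambda>k. complex_of_real (1 / fact (k + 1)) * z^k)"
    using False by (intro ext) (simp add: scaleR_conv_of_real divide_inverse del: fact_Suc)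
  ultimately show ?thesis using False by (simp add: jfun_def)
qed

lemma mexp_rot:
  fixes B :: "real^'n^'n"
  assumes rot: "B *v y = s *\<^sub>R u" "B *v u = (- s) *\<^sub>R y"
  shows "mexp B *v y = cos s *\<^sub>R y + sin s *\<^sub>R u"
proof -
  have sm: "summable (\<lambda>k. (1 / fact k) *\<^sub>R mpow B k)" by (rule mseries_summable) simp
  have "mexp B *v y = Re (exp (\<i> * of_real s)) *\<^sub>R y + Im (exp (\<i> * of_real s)) *\<^sub>R u"
    unfolding mexp_def by (rule rot_series[OF rot sm exp_sums_c])
  thus ?thesis by (simp add: exp_Euler cos_of_real sin_of_real)
qed

lemma Jmat_rot:
  fixes B :: "real^'n^'n"
  assumes rot: "B *v y = s *\<^sub>R u" "B *v u = (- s) *\<^sub>R y"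
  shows "Jmat B *v y = Re (jfun (\<i> * of_real s)) *\<^sub>R y + Im (jfun (\<i> * of_real s)) *\<^sub>R u"
proof -
  have sm: "summable (\<lambda>k. (1 / fact (k + 1)) *\<^sub>R mpow B k)"
    by (rule mseries_summable) (simp add: fact_mono divide_simps del: fact_Suc)
  show ?thesis
    unfolding Jmat_def by (rule rot_series[OF rot sm j_sums_c])
qed



lemma sum_delta_mult: "(\<Sum>j\<in>UNIV. (if i = j then z else 0) * (w $ j::'a::comm_ring_1)) = z * w $ i"
proof -
  have "(\<Sum>j\<in>UNIV. (if i = j then z else 0) * (w $ j::'a::comm_ring_1)) = (\<Sum>j\<in>UNIV. if i = j then z * w $ j else 0)"
    by (rule sum.cong) auto
  thus ?thesis by simp
qed

lemma mat_mv_comp: "(mat z *v w) $ i = z * (w $ i :: 'a::comm_ring_1)"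
  by (simp add: matrix_vector_mult_def mat_def sum_delta_mult)

lemma det_zero_of_kernel:
  fixes M :: "complex^'n^'n"
  assumes "M *v w = 0" "w \<noteq> 0"
  shows "det M = 0"
proof (rule ccontr)
  assume "det M \<noteq> 0"
  hence "inj ((*v) M)"
    using det_nz_iff_inj_gen[OF matrix_vector_mul_linear_gen[of M]] by (simp add: matrix_of_matrix_vector_mul)
  thus False using assms vec.inj_iff_eq_0 by blast
qed

lemma kernel_of_det_zero:
  fixes M :: "complex^'n^'n"
  assumes "det M = 0"
  obtains w where "M *v w = 0" "w \<noteq> 0"
proof -
  have "\<not> inj ((*v) M)"
    using det_nz_iff_inj_gen[OF matrix_vector_mul_linear_gen[of M]] assms by (simp add: matrix_of_matrix_vector_mul)
  thus ?thesis using that vec.inj_iff_eq_0 by blast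
qed

lemma cmat_mult_component:
  "(cmat B *v w) $ i = Complex ((B *v (\<chi> j. Re (w $ j))) $ i) ((B *v (\<chi> j. Im (w $ j))) $ i)"
  by (simp add: cmat_def matrix_vector_mult_def complex_eq_iff Re_sum Im_sum)

lemma eig_of_rot:
  fixes B :: "real^'n^'n"
  assumes "B *v y = s *\<^sub>R u" "B *v u = (- s) *\<^sub>R y" "y \<noteq> 0"
  shows "is_eigenvalue B (\<i> * of_real s)"
proof -
  define w :: "complex^'n" where "w = (\<chi> i. Complex (y $ i) (- (u $ i)))"
  have re: "(\<chi> j. Re (w $ j)) = y" and im: "(\<chi> j. Im (w $ j)) = - u"
    by (simp_all add: w_def vec_eq_iff)
  have "(cmat B - mat (\<i> * of_real s)) *v w = 0"
  proof -
    have "(cmat B *v w) $ i = (mat (\<i> * of_real s) *v w) $ i" for i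
      unfolding cmat_mult_component re im mat_mv_comp
      by (simp add: assms(1,2) vec.neg w_def complex_eq_iff)
    thus ?thesis by (simp add: matrix_vector_mult_diff_rdistrib vec_eq_iff)
  qed
  moreover have "w \<noteq> 0"
  proof
    assume "w = 0"
    hence "(\<chi> j. Re (w $ j)) = 0" by (simp add: vec_eq_iff)
    thus False using re assms(3) by simp
  qed
  ultimately show ?thesis unfolding is_eigenvalue_def by (rule det_zero_of_kernel)
qed

lemma norm_sq_vec: "(norm (x::real^'n))^2 = (\<Sum>i\<in>UNIV. (x $ i)^2)"
  by (simp only: power2_norm_eq_inner) (simp add: inner_vec_def power2_eq_square)

lemma eig_bound:
  fixes B :: "real^'n^'n"
  assumes "is_eigenvalue B z" and b: "0 \<le> b" and bd: "\<And>x. norm (B *v x) \<le> b * norm x"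
  shows "cmod z \<le> b"
proof -
  obtain w where w: "(cmat B - mat z) *v w = 0" "w \<noteq> 0"
    using assms(1) kernel_of_det_zero unfolding is_eigenvalue_def by blast
  define a where "a = (\<chi> j. Re (w $ j))"
  define c where "c = (\<chi> j. Im (w $ j))"
  have comp: "Complex ((B *v a) $ i) ((B *v c) $ i) = z * w $ i" for i
  proof -
    have "(cmat B *v w) $ i = (mat z *v w) $ i" using w(1)
      by (simp add: matrix_vector_mult_diff_rdistrib vec_eq_iff)
    thus ?thesis unfolding cmat_mult_component a_def c_def mat_mv_comp .
  qed
  have wsum: "(\<Sum>i\<in>UNIV. (cmod (w $ i))^2) = (norm a)^2 + (norm c)^2"
    by (simp add: norm_sq_vec a_def c_def cmod_power2 sum.distrib)
  have "(cmod z)^2 * (\<Sum>i\<in>UNIV. (cmod (w $ i))^2) = (\<Sum>i\<in>UNIV. (cmod (z * w $ i))^2)"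
    by (simp add: sum_distrib_left norm_mult power_mult_distrib)
  also have "\<dots> = (norm (B *v a))^2 + (norm (B *v c))^2"
    unfolding comp[symmetric] by (simp add: norm_sq_vec cmod_power2 sum.distrib)
  also have "\<dots> \<le> (b * norm a)^2 + (b * norm c)^2"
    by (intro add_mono power_mono bd) auto
  also have "\<dots> = b^2 * (\<Sum>i\<in>UNIV. (cmod (w $ i))^2)"
    unfolding wsum by (simp add: power_mult_distrib algebra_simps)
  finally have le: "(cmod z)^2 * (\<Sum>i\<in>UNIV. (cmod (w $ i))^2) \<le> b^2 * (\<Sum>i\<in>UNIV. (cmod (w $ i))^2)" .
  obtain i where "w $ i \<noteq> 0" using w(2) by (auto simp: vec_eq_iff)
  hence "0 < (\<Sum>i\<in>UNIV. (cmod (w $ i))^2)"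
    by (intro sum_pos2[where i=i]) auto
  hence sq: "(cmod z)^2 \<le> b^2" using le by simp
  show ?thesis by (rule power2_le_imp_le[OF sq b])
qed



lemma tcos_le_sin:
  assumes "0 \<le> t" "t \<le> pi"
  shows "t * cos t \<le> sin t"
proof -
  have "(\<lambda>x. sin x - x * cos x) 0 \<le> (\<lambda>x. sin x - x * cos x) t"
  proof (rule DERIV_nonneg_imp_nondecreasing[OF assms(1)])
    fix x assume x: "0 \<le> x" "x \<le> t"
    have "((\<lambda>x. sin x - x * cos x) has_real_derivative (x * sin x)) (at x)"
      by (auto intro!: derivative_eq_intros simp: algebra_simps)
    moreover have "0 \<le> x * sin x" using x assms by (intro mult_nonneg_nonneg sin_ge_zero) auto
    ultimately show "\<exists>y. ((\<lambda>x. sin x - x * cos x) has_real_derivative y) (at x) \<and> 0 \<le> y" by blast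
  qed
  thus ?thesis by simp
qed

lemma sqrt2_gt: "1.4 < sqrt (2::real)"
  by (rule real_less_rsqrt) (simp add: power2_eq_square)

lemma jordan4:
  assumes "0 \<le> t" "t \<le> pi / 4"
  shows "t \<le> pi / 2 * sin t"
proof -
  have c: "sqrt 2 / 2 \<le> cos t"
    using cos_monotone_0_pi_le[of t "pi/4"] assms by (simp add: cos_45)
  have "t * (sqrt 2 / 2) \<le> t * cos t" using c assms by (intro mult_left_mono) auto
  also have "\<dots> \<le> sin t" using assms tcos_le_sin[of t] pi_gt3 by simp
  finally have s: "t * (sqrt 2 / 2) \<le> sin t" .
  have k: "1 \<le> pi / 2 * (sqrt 2 / 2)"
  proof -
    have "3 * 1.4 \<le> pi * sqrt 2" using pi_gt3 sqrt2_gt by (intro mult_mono) auto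
    thus ?thesis by simp
  qed
  have "t * 1 \<le> t * (pi / 2 * (sqrt 2 / 2))" using k assms(1) by (intro mult_left_mono) auto
  hence "t \<le> t * (pi / 2 * (sqrt 2 / 2))" by simp
  also have "\<dots> = pi / 2 * (t * (sqrt 2 / 2))" by simp
  also have "\<dots> \<le> pi / 2 * sin t" using s by (intro mult_left_mono) auto
  finally show ?thesis .
qed

lemma Q_eq: "2 - 2 * cos (s::real) = 4 * (sin (s / 2))^2"
proof -
  have "cos s = cos (2 * (s / 2))" by simp
  also have "\<dots> = 1 - 2 * (sin (s / 2))^2" by (rule cos_double_sin)
  finally show ?thesis by simp
qed

lemma Q_upper:
  fixes s :: real
  assumes "0 \<le> s"
  shows "2 - 2 * cos s \<le> s^2"
proof -
  have "0 \<le> sin (s/2)" if "s/2 \<le> pi" using that assms by (intro sin_ge_zero) auto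
  have "\<bar>sin (s/2)\<bar> \<le> \<bar>s/2\<bar>" by (rule abs_sin_x_le_abs_x)
  hence "(sin (s/2))^2 \<le> (s/2)^2"
    by (metis abs_le_square_iff)
  thus ?thesis unfolding Q_eq by (simp add: power_divide)
qed

lemma Q_lower:
  fixes s :: real
  assumes "0 \<le> s" "s \<le> pi / 2"
  shows "s^2 \<le> (pi/2)^2 * (2 - 2 * cos s)"
proof -
  have "s/2 \<le> pi / 2 * sin (s/2)" using assms by (intro jordan4) auto
  hence "(s/2)^2 \<le> (pi / 2 * sin (s/2))^2" using assms by (intro power_mono) auto
  thus ?thesis unfolding Q_eq by (simp add: power_mult_distrib power_divide)
qed

lemma skew_P: "transpose B = - (B::real^'n^'n) \<Longrightarrow> (transpose B ** B) *v x = - (B *v (B *v x))"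
  by (simp add: matrix_vector_mul_assoc[symmetric] neg_mv)

lemma sym_P: "transpose (transpose B ** (B::real^'n^'n)) = transpose B ** B"
  by (simp add: matrix_transpose_mul)

lemma norm_comb:
  assumes "y \<bullet> u = 0"
  shows "(norm (a *\<^sub>R y + b *\<^sub>R u))^2 = a^2 * (norm y)^2 + b^2 * (norm u)^2"
proof -
  have "orthogonal (a *\<^sub>R y) (b *\<^sub>R u)" using assms by (simp add: orthogonal_def)
  from norm_add_Pythagorean[OF this] show ?thesis by (simp add: power_mult_distrib)
qed

lemma rot_setup:
  fixes B :: "real^'n^'n"
  assumes skew: "transpose B = - B" and Py: "(transpose B ** B) *v y = \<mu> *\<^sub>R y" and y: "y \<noteq> 0"
  obtains u where "0 \<le> \<mu>" "B *v y = sqrt \<mu> *\<^sub>R u" "B *v u = (- sqrt \<mu>) *\<^sub>R y" "y \<bullet> u = 0"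
    "\<mu> = 0 \<Longrightarrow> u = 0" "\<mu> \<noteq> 0 \<Longrightarrow> norm u = norm y" "(transpose B ** B) *v u = \<mu> *\<^sub>R u"
proof -
  have BB: "B *v (B *v y) = (- \<mu>) *\<^sub>R y" using Py skew_P[OF skew, of y]
    by (metis minus_minus scaleR_minus_left)
  have nBy: "(B *v y) \<bullet> (B *v y) = \<mu> * (y \<bullet> y)"
    using skew_dot[OF skew, of y "B *v y"] BB by simp
  have yy: "0 < y \<bullet> y" using y by simp
  have mu: "0 \<le> \<mu>"
  proof -
    have "0 \<le> \<mu> * (y \<bullet> y)" using nBy[symmetric] by simp
    thus ?thesis using yy by (simp add: zero_le_mult_iff)
  qed
  show ?thesis
  proof (cases "\<mu> = 0")
    case True
    hence "B *v y = 0" using nBy by simp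
    thus ?thesis using that[of 0] mu True by simp
  next
    case False
    define s where "s = sqrt \<mu>"
    have s: "0 < s" using mu False by (simp add: s_def)
    have ss: "s * s = \<mu>" using mu by (simp add: s_def)
    define u where "u = (1 / s) *\<^sub>R (B *v y)"
    have 1: "B *v y = s *\<^sub>R u" using s by (simp add: u_def)
    have 2: "B *v u = (- s) *\<^sub>R y"
      using s BB ss[symmetric] by (simp add: u_def matrix_vector_mult_scaleR)
    have 3: "y \<bullet> u = 0" using skew_self[OF skew, of y] by (simp add: u_def)
    have "(norm u)^2 = (norm y)^2"
      using s nBy ss[symmetric] by (simp only: u_def power2_norm_eq_inner inner_scaleR_left inner_scaleR_right) (simp add: power2_eq_square)
    hence 4: "norm u = norm y" by (simp add: power2_eq_iff_nonneg)
    have 5: "(transpose B ** B) *v u = \<mu> *\<^sub>R u"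
      unfolding skew_P[OF skew] using 2 1 s ss[symmetric]
      by (simp add: matrix_vector_mult_scaleR vec.neg)
    show ?thesis using that[of u] 1 2 3 4 5 mu False unfolding s_def by blast
  qed
qed

lemma valid_small:
  fixes B R :: "real^'n^'n"
  assumes skew: "transpose B = - B" and eig: "\<forall>z. is_eigenvalue B z \<longrightarrow> cmod z < pi"
    and R: "mexp B = R" and hR: "opnorm2 (R - mat 1) < sqrt 2"
    and rot: "B *v y = s *\<^sub>R u" "B *v u = (- s) *\<^sub>R y" and yu: "y \<bullet> u = 0"
    and nu: "s \<noteq> 0 \<Longrightarrow> norm u = norm y" and y: "y \<noteq> 0" and s: "0 \<le> s"
  shows "s < pi / 2"
proof (cases "s = 0")
  case True then show ?thesis by simp
next
  case False
  have "cmod (\<i> * of_real s) < pi" using eig eig_of_rot[OF rot y] by blast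
  hence spi: "s < pi" using s by (simp add: norm_mult)
  have Ry: "(R - mat 1) *v y = (cos s - 1) *\<^sub>R y + sin s *\<^sub>R u"
    using mexp_rot[OF rot] R by (simp add: matrix_vector_mult_diff_rdistrib algebra_simps)
  have "(norm ((R - mat 1) *v y))^2 = (2 - 2 * cos s) * (norm y)^2"
    unfolding Ry norm_comb[OF yu] nu[OF False]
    by (simp add: power2_eq_square algebra_simps) (simp add: sin_squared_eq[unfolded power2_eq_square] algebra_simps)
  moreover have "norm ((R - mat 1) *v y) < sqrt 2 * norm y"
    using mv_bound[of "R - mat 1" y] hR y by (meson le_less_trans mult_strict_right_mono zero_less_norm_iff)
  hence "(norm ((R - mat 1) *v y))^2 < (sqrt 2 * norm y)^2"
    by (intro power_strict_mono) auto
  ultimately have "(2 - 2 * cos s) * (norm y)^2 < 2 * (norm y)^2" by (simp add: power_mult_distrib)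
  hence "cos s > 0" using y by simp
  show ?thesis
  proof (rule ccontr)
    assume "\<not> s < pi / 2"
    hence "cos s \<le> cos (pi/2)" using spi by (intro cos_monotone_0_pi_le) auto
    thus False using \<open>cos s > 0\<close> by simp
  qed
qed



lemma jfun_rot:
  assumes "s \<noteq> 0"
  shows "Re (jfun (\<i> * of_real s)) = sin s / s" "Im (jfun (\<i> * of_real s)) = (1 - cos s) / s"
proof -
  have e: "exp (\<i> * of_real s) - 1 = (\<i> * of_real s) * Complex (sin s / s) ((1 - cos s) / s)"
    using assms by (simp add: exp_Euler cos_of_real sin_of_real complex_eq_iff field_simps)
  have "jfun (\<i> * of_real s) = Complex (sin s / s) ((1 - cos s) / s)"
    using assms unfolding jfun_def e by simp
  thus "Re (jfun (\<i> * of_real s)) = sin s / s" "Im (jfun (\<i> * of_real s)) = (1 - cos s) / s" by simp_all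
qed

lemma comb_cmp:
  assumes yu: "y \<bullet> u = 0" and nu: "norm u = norm y" and c: "0 \<le> c"
    and le: "a^2 + b^2 \<le> c^2 * (a'^2 + b'^2)"
  shows "norm (a *\<^sub>R y + b *\<^sub>R u) \<le> c * norm (a' *\<^sub>R y + b' *\<^sub>R u)"
proof -
  have "(norm (a *\<^sub>R y + b *\<^sub>R u))^2 = (a^2 + b^2) * (norm y)^2"
    unfolding norm_comb[OF yu] nu by (simp add: algebra_simps)
  also have "\<dots> \<le> c^2 * (a'^2 + b'^2) * (norm y)^2" by (intro mult_right_mono le) auto
  also have "\<dots> = (c * norm (a' *\<^sub>R y + b' *\<^sub>R u))^2"
    unfolding power_mult_distrib norm_comb[OF yu] nu by (simp add: algebra_simps)
  finally have sq: "(norm (a *\<^sub>R y + b *\<^sub>R u))^2 \<le> (c * norm (a' *\<^sub>R y + b' *\<^sub>R u))^2" .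
  show ?thesis by (rule power2_le_imp_le[OF sq]) (simp add: c)
qed

lemma comb_eig:
  fixes P :: "real^'n^'n"
  assumes "P *v y = \<mu> *\<^sub>R y" "P *v u = \<mu> *\<^sub>R u"
  shows "P *v (a *\<^sub>R y + b *\<^sub>R u) = \<mu> *\<^sub>R (a *\<^sub>R y + b *\<^sub>R u)"
  using assms by (simp add: matrix_vector_right_distrib matrix_vector_mult_scaleR algebra_simps)

context
  fixes R B :: "real^'n^'n"
  assumes skew: "transpose B = - B" and eig: "\<forall>z. is_eigenvalue B z \<longrightarrow> cmod z < pi"
    and R: "mexp B = R" and hR: "opnorm2 (R - mat 1) < sqrt 2"
begin

lemma valid_forms:
  assumes Py: "(transpose B ** B) *v y = \<mu> *\<^sub>R y" and y: "y \<noteq> 0"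
  obtains u where "sqrt \<mu> < pi / 2" "0 \<le> \<mu>" "y \<bullet> u = 0" "\<mu> = 0 \<Longrightarrow> u = 0" "\<mu> \<noteq> 0 \<Longrightarrow> norm u = norm y"
    "(transpose B ** B) *v u = \<mu> *\<^sub>R u"
    "B *v y = sqrt \<mu> *\<^sub>R u" "B *v u = (- sqrt \<mu>) *\<^sub>R y"
    "R *v y = cos (sqrt \<mu>) *\<^sub>R y + sin (sqrt \<mu>) *\<^sub>R u"
    "(R - mat 1) *v y = (cos (sqrt \<mu>) - 1) *\<^sub>R y + sin (sqrt \<mu>) *\<^sub>R u"
    "Jmat B *v y = Re (jfun (\<i> * of_real (sqrt \<mu>))) *\<^sub>R y + Im (jfun (\<i> * of_real (sqrt \<mu>))) *\<^sub>R u"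
proof -
  obtain u where u: "0 \<le> \<mu>" "B *v y = sqrt \<mu> *\<^sub>R u" "B *v u = (- sqrt \<mu>) *\<^sub>R y" "y \<bullet> u = 0"
    "\<mu> = 0 \<Longrightarrow> u = 0" "\<mu> \<noteq> 0 \<Longrightarrow> norm u = norm y" "(transpose B ** B) *v u = \<mu> *\<^sub>R u"
    using rot_setup[OF skew Py y] by blast
  have small: "sqrt \<mu> < pi / 2"
    by (rule valid_small[OF skew eig R hR u(2,3,4) _ y]) (use u in auto)
  have Ry: "R *v y = cos (sqrt \<mu>) *\<^sub>R y + sin (sqrt \<mu>) *\<^sub>R u"
    using mexp_rot[OF u(2,3)] R by simp
  have R1y: "(R - mat 1) *v y = (cos (sqrt \<mu>) - 1) *\<^sub>R y + sin (sqrt \<mu>) *\<^sub>R u"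
    using Ry by (simp add: matrix_vector_mult_diff_rdistrib algebra_simps)
  show ?thesis using that[OF small u(1,4,5,6,7,2,3) Ry R1y Jmat_rot[OF u(2,3)]] .
qed

lemma sym_PB: "transpose (transpose B ** B) = transpose B ** B" by (rule sym_P)

lemma cmp_generic:
  fixes F G :: "real^'n^'n"
  assumes c: "0 \<le> c"
    and H: "\<And>y \<mu> u. (transpose B ** B) *v y = \<mu> *\<^sub>R y \<Longrightarrow> y \<noteq> 0 \<Longrightarrow>
      sqrt \<mu> < pi / 2 \<Longrightarrow> 0 \<le> \<mu> \<Longrightarrow> (\<mu> = 0 \<Longrightarrow> u = 0) \<Longrightarrow>
      B *v y = sqrt \<mu> *\<^sub>R u \<Longrightarrow>
      (R - mat 1) *v y = (cos (sqrt \<mu>) - 1) *\<^sub>R y + sin (sqrt \<mu>) *\<^sub>R u \<Longrightarrow>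
      Jmat B *v y = Re (jfun (\<i> * of_real (sqrt \<mu>))) *\<^sub>R y + Im (jfun (\<i> * of_real (sqrt \<mu>))) *\<^sub>R u \<Longrightarrow>
      \<exists>a b a' b'. F *v y = a *\<^sub>R y + b *\<^sub>R u \<and> G *v y = a' *\<^sub>R y + b' *\<^sub>R u \<and>
        (\<mu> \<noteq> 0 \<longrightarrow> a^2 + b^2 \<le> c^2 * (a'^2 + b'^2)) \<and> (\<mu> = 0 \<longrightarrow> \<bar>a\<bar> \<le> c * \<bar>a'\<bar>)"
  shows "norm (F *v x) \<le> c * norm (G *v x)"
proof (rule compare_norm[OF sym_PB c])
  fix y \<mu> assume Py: "(transpose B ** B) *v y = \<mu> *\<^sub>R y"
  show "(transpose B ** B) *v (F *v y) = \<mu> *\<^sub>R (F *v y) \<and>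
        (transpose B ** B) *v (G *v y) = \<mu> *\<^sub>R (G *v y) \<and>
        norm (F *v y) \<le> c * norm (G *v y)"
  proof (cases "y = 0")
    case True then show ?thesis by simp
  next
    case False
    obtain u where u: "sqrt \<mu> < pi / 2" "0 \<le> \<mu>" "y \<bullet> u = 0" "\<mu> = 0 \<Longrightarrow> u = 0" "\<mu> \<noteq> 0 \<Longrightarrow> norm u = norm y"
      "(transpose B ** B) *v u = \<mu> *\<^sub>R u"
      "B *v y = sqrt \<mu> *\<^sub>R u" "B *v u = (- sqrt \<mu>) *\<^sub>R y"
      "R *v y = cos (sqrt \<mu>) *\<^sub>R y + sin (sqrt \<mu>) *\<^sub>R u"
      "(R - mat 1) *v y = (cos (sqrt \<mu>) - 1) *\<^sub>R y + sin (sqrt \<mu>) *\<^sub>R u"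
      "Jmat B *v y = Re (jfun (\<i> * of_real (sqrt \<mu>))) *\<^sub>R y + Im (jfun (\<i> * of_real (sqrt \<mu>))) *\<^sub>R u"
      using valid_forms[OF Py False] by blast
    obtain a b a' b' where ab: "F *v y = a *\<^sub>R y + b *\<^sub>R u" "G *v y = a' *\<^sub>R y + b' *\<^sub>R u"
        "\<mu> \<noteq> 0 \<longrightarrow> a^2 + b^2 \<le> c^2 * (a'^2 + b'^2)" "\<mu> = 0 \<longrightarrow> \<bar>a\<bar> \<le> c * \<bar>a'\<bar>"
      using H[OF Py False u(1,2,4,7,10,11)] by blast
    show ?thesis
    proof (intro conjI)
      show "(transpose B ** B) *v (F *v y) = \<mu> *\<^sub>R (F *v y)"
        unfolding ab(1) by (rule comb_eig[OF Py u(6)])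
      show "(transpose B ** B) *v (G *v y) = \<mu> *\<^sub>R (G *v y)"
        unfolding ab(2) by (rule comb_eig[OF Py u(6)])
      show "norm (F *v y) \<le> c * norm (G *v y)"
      proof (cases "\<mu> = 0")
        case True
        hence "norm (F *v y) = \<bar>a\<bar> * norm y" "norm (G *v y) = \<bar>a'\<bar> * norm y"
          using u(4) ab(1,2) by simp_all
        thus ?thesis using ab(4) True by (simp add: mult_right_mono mult.assoc[symmetric])
      next
        case False
        show ?thesis unfolding ab(1,2)
          by (rule comb_cmp[OF u(3) u(5)[OF False] c]) (use ab(3) False in auto)
      qed
    qed
  qed
qed

lemma cs_sq: "(cos x - 1)^2 + (sin x)^2 = 2 - 2 * cos (x::real)"
  using sin_cos_squared_add[of x] by (simp add: power2_diff)

lemma cs_sq2: "(sin x)^2 + (1 - cos x)^2 = 2 - 2 * cos (x::real)"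
  using sin_cos_squared_add[of x] by (simp add: power2_diff)

lemma cmp1: "norm ((R - mat 1) *v x) \<le> 1 * norm (B *v x)"
proof (rule cmp_generic)
  fix y \<mu> u assume h: "sqrt \<mu> < pi / 2" "0 \<le> \<mu>" "\<mu> = 0 \<Longrightarrow> u = 0" "B *v y = sqrt \<mu> *\<^sub>R u"
    "(R - mat 1) *v y = (cos (sqrt \<mu>) - 1) *\<^sub>R y + sin (sqrt \<mu>) *\<^sub>R u"
  have "2 - 2 * cos (sqrt \<mu>) \<le> (sqrt \<mu>)^2" using h(2) by (intro Q_upper) simp
  thus "\<exists>a b a' b'. (R - mat 1) *v y = a *\<^sub>R y + b *\<^sub>R u \<and> B *v y = a' *\<^sub>R y + b' *\<^sub>R u \<and>
        (\<mu> \<noteq> 0 \<longrightarrow> a^2 + b^2 \<le> 1^2 * (a'^2 + b'^2)) \<and> (\<mu> = 0 \<longrightarrow> \<bar>a\<bar> \<le> 1 * \<bar>a'\<bar>)"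
    using h by (intro exI[of _ "cos (sqrt \<mu>) - 1"] exI[of _ "sin (sqrt \<mu>)"] exI[of _ 0] exI[of _ "sqrt \<mu>"])
      (auto simp: cs_sq)
qed simp

lemma cmp2: "norm (B *v x) \<le> (pi / 2) * norm ((R - mat 1) *v x)"
proof (rule cmp_generic)
  fix y \<mu> u assume h: "sqrt \<mu> < pi / 2" "0 \<le> \<mu>" "\<mu> = 0 \<Longrightarrow> u = 0" "B *v y = sqrt \<mu> *\<^sub>R u"
    "(R - mat 1) *v y = (cos (sqrt \<mu>) - 1) *\<^sub>R y + sin (sqrt \<mu>) *\<^sub>R u"
  have "(sqrt \<mu>)^2 \<le> (pi/2)^2 * (2 - 2 * cos (sqrt \<mu>))" using h(1,2) by (intro Q_lower) auto
  thus "\<exists>a b a' b'. B *v y = a *\<^sub>R y + b *\<^sub>R u \<and> (R - mat 1) *v y = a' *\<^sub>R y + b' *\<^sub>R u \<and>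
        (\<mu> \<noteq> 0 \<longrightarrow> a^2 + b^2 \<le> (pi/2)^2 * (a'^2 + b'^2)) \<and> (\<mu> = 0 \<longrightarrow> \<bar>a\<bar> \<le> (pi/2) * \<bar>a'\<bar>)"
    using h by (intro exI[of _ 0] exI[of _ "sqrt \<mu>"] exI[of _ "cos (sqrt \<mu>) - 1"] exI[of _ "sin (sqrt \<mu>)"])
      (auto simp: cs_sq)
qed simp

lemma cmp3: "norm (B *v x) \<le> (pi / 2) * norm (mat 1 *v x)"
proof (rule cmp_generic)
  fix y \<mu> u assume h: "sqrt \<mu> < pi / 2" "0 \<le> \<mu>" "\<mu> = 0 \<Longrightarrow> u = 0" "B *v y = sqrt \<mu> *\<^sub>R u"
  have "(sqrt \<mu>)^2 \<le> (pi/2)^2" using h(1,2) by (intro power_mono) auto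
  thus "\<exists>a b a' b'. B *v y = a *\<^sub>R y + b *\<^sub>R u \<and> mat 1 *v y = a' *\<^sub>R y + b' *\<^sub>R u \<and>
        (\<mu> \<noteq> 0 \<longrightarrow> a^2 + b^2 \<le> (pi/2)^2 * (a'^2 + b'^2)) \<and> (\<mu> = 0 \<longrightarrow> \<bar>a\<bar> \<le> (pi/2) * \<bar>a'\<bar>)"
    using h by (intro exI[of _ 0] exI[of _ "sqrt \<mu>"] exI[of _ 1] exI[of _ 0]) auto
qed simp

lemma jfun_sq:
  assumes "s \<noteq> 0"
  shows "(Re (jfun (\<i> * of_real s)))^2 + (Im (jfun (\<i> * of_real s)))^2 = (2 - 2 * cos s) / s^2"
  unfolding jfun_rot[OF assms] by (simp add: power_divide add_divide_distrib[symmetric] cs_sq2)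

lemma cmp4: "norm (Jmat B *v x) \<le> 1 * norm (mat 1 *v x)"
proof (rule cmp_generic)
  fix y \<mu> u assume h: "sqrt \<mu> < pi / 2" "0 \<le> \<mu>" "\<mu> = 0 \<Longrightarrow> u = 0" "B *v y = sqrt \<mu> *\<^sub>R u"
    "(R - mat 1) *v y = (cos (sqrt \<mu>) - 1) *\<^sub>R y + sin (sqrt \<mu>) *\<^sub>R u"
    "Jmat B *v y = Re (jfun (\<i> * of_real (sqrt \<mu>))) *\<^sub>R y + Im (jfun (\<i> * of_real (sqrt \<mu>))) *\<^sub>R u"
  have "\<mu> \<noteq> 0 \<Longrightarrow> (Re (jfun (\<i> * of_real (sqrt \<mu>))))^2 + (Im (jfun (\<i> * of_real (sqrt \<mu>))))^2 \<le> 1"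
  proof -
    assume nz: "\<mu> \<noteq> 0"
    hence sp: "0 < (sqrt \<mu>)^2" using h(2) by simp
    have nz': "sqrt \<mu> \<noteq> 0" using nz h(2) by simp
    have "2 - 2 * cos (sqrt \<mu>) \<le> (sqrt \<mu>)^2" using h(2) by (intro Q_upper) simp
    thus ?thesis unfolding jfun_sq[OF nz'] using nz h(2) sp by (simp add: divide_le_eq_1)
  qed
  moreover have "\<mu> = 0 \<Longrightarrow> Re (jfun (\<i> * of_real (sqrt \<mu>))) = 1" by (simp add: jfun_def)
  ultimately show "\<exists>a b a' b'. Jmat B *v y = a *\<^sub>R y + b *\<^sub>R u \<and> mat 1 *v y = a' *\<^sub>R y + b' *\<^sub>R u \<and>
        (\<mu> \<noteq> 0 \<longrightarrow> a^2 + b^2 \<le> 1^2 * (a'^2 + b'^2)) \<and> (\<mu> = 0 \<longrightarrow> \<bar>a\<bar> \<le> 1 * \<bar>a'\<bar>)"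
    using h(6) by (intro exI[of _ "Re (jfun (\<i> * of_real (sqrt \<mu>)))"] exI[of _ "Im (jfun (\<i> * of_real (sqrt \<mu>)))"] exI[of _ 1] exI[of _ 0]) auto
qed simp

lemma cmp5: "norm (mat 1 *v x) \<le> (pi / 2) * norm (Jmat B *v x)"
proof (rule cmp_generic)
  fix y \<mu> u assume h: "sqrt \<mu> < pi / 2" "0 \<le> \<mu>" "\<mu> = 0 \<Longrightarrow> u = 0" "B *v y = sqrt \<mu> *\<^sub>R u"
    "(R - mat 1) *v y = (cos (sqrt \<mu>) - 1) *\<^sub>R y + sin (sqrt \<mu>) *\<^sub>R u"
    "Jmat B *v y = Re (jfun (\<i> * of_real (sqrt \<mu>))) *\<^sub>R y + Im (jfun (\<i> * of_real (sqrt \<mu>))) *\<^sub>R u"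
  have "\<mu> \<noteq> 0 \<Longrightarrow> 1 \<le> (pi/2)^2 * ((Re (jfun (\<i> * of_real (sqrt \<mu>))))^2 + (Im (jfun (\<i> * of_real (sqrt \<mu>))))^2)"
  proof -
    assume nz: "\<mu> \<noteq> 0"
    hence sp: "0 < (sqrt \<mu>)^2" using h(2) by simp
    have nz': "sqrt \<mu> \<noteq> 0" using nz h(2) by simp
    have "(sqrt \<mu>)^2 \<le> (pi/2)^2 * (2 - 2 * cos (sqrt \<mu>))" using h(1,2) by (intro Q_lower) auto
    thus ?thesis unfolding jfun_sq[OF nz'] using nz h(2) sp by (simp add: le_divide_eq)
  qed
  moreover have "\<mu> = 0 \<Longrightarrow> Re (jfun (\<i> * of_real (sqrt \<mu>))) = 1" by (simp add: jfun_def)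
  moreover have "1 \<le> pi / 2" using pi_gt3 by simp
  ultimately show "\<exists>a b a' b'. mat 1 *v y = a *\<^sub>R y + b *\<^sub>R u \<and> Jmat B *v y = a' *\<^sub>R y + b' *\<^sub>R u \<and>
        (\<mu> \<noteq> 0 \<longrightarrow> a^2 + b^2 \<le> (pi/2)^2 * (a'^2 + b'^2)) \<and> (\<mu> = 0 \<longrightarrow> \<bar>a\<bar> \<le> (pi/2) * \<bar>a'\<bar>)"
    using h(6) by (intro exI[of _ 1] exI[of _ 0] exI[of _ "Re (jfun (\<i> * of_real (sqrt \<mu>)))"] exI[of _ "Im (jfun (\<i> * of_real (sqrt \<mu>)))"]) auto
qed simp

end



definition Cm :: "real^'n^'n \<Rightarrow> real^'n^'n" where "Cm R = (1/2) *\<^sub>R (R + transpose R)"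
definition Km :: "real^'n^'n \<Rightarrow> real^'n^'n" where "Km R = (1/2) *\<^sub>R (R - transpose R)"
definition hc :: "real \<Rightarrow> real" where "hc c = arccos c / sqrt (1 - c^2)"

lemma transpose_add': "transpose (A + B) = transpose A + transpose (B::'a::semiring_1^'n^'m)"
  by (simp add: transpose_def vec_eq_iff)
lemma transpose_diff': "transpose (A - B) = transpose A - transpose (B::'a::ring_1^'n^'m)"
  by (simp add: transpose_def vec_eq_iff)

lemma Cm_v: "Cm R *v x = (1/2) *\<^sub>R (R *v x + transpose R *v x)"
  by (simp add: Cm_def scaleR_matrix_vector_assoc[symmetric] matrix_vector_mult_add_rdistrib)
lemma Km_v: "Km R *v x = (1/2) *\<^sub>R (R *v x - transpose R *v x)"
  by (simp add: Km_def scaleR_matrix_vector_assoc[symmetric] matrix_vector_mult_diff_rdistrib)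
lemma Cm_sym: "transpose (Cm R) = Cm R"
  by (simp add: Cm_def transpose_scalar transpose_add' add.commute)
lemma Km_skew: "transpose (Km R) = - Km R"
  by (simp add: Km_def transpose_scalar transpose_diff' scaleR_diff_right)

lemma hc_cos:
  assumes "0 \<le> s" "s < pi / 2"
  shows "hc (cos s) * sin s = s"
proof (cases "s = 0")
  case True then show ?thesis by (simp add: hc_def)
next
  case False
  have sp: "0 < sin s" using assms False by (intro sin_gt_zero) auto
  have "sqrt (1 - (cos s)^2) = sin s" using sin_cos_sqrt[of s] sp by simp
  moreover have "arccos (cos s) = s" using assms by (intro arccos_cos) auto
  ultimately show ?thesis using sp by (simp add: hc_def)
qed

context
  fixes R B :: "real^'n^'n"
  assumes skew: "transpose B = - B" and eig: "\<forall>z. is_eigenvalue B z \<longrightarrow> cmod z < pi"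
    and R: "mexp B = R" and hR: "opnorm2 (R - mat 1) < sqrt 2" and orth: "transpose R ** R = mat 1"
begin

lemma valid_CK:
  assumes Py: "(transpose B ** B) *v y = \<mu> *\<^sub>R y" and y: "y \<noteq> 0"
  obtains u where "Cm R *v y = cos (sqrt \<mu>) *\<^sub>R y" "Km R *v y = sin (sqrt \<mu>) *\<^sub>R u"
    "B *v y = sqrt \<mu> *\<^sub>R u" "sqrt \<mu> < pi / 2" "0 \<le> \<mu>" "\<mu> = 0 \<Longrightarrow> u = 0"
proof -
  obtain u where u: "sqrt \<mu> < pi / 2" "0 \<le> \<mu>" "y \<bullet> u = 0" "\<mu> = 0 \<Longrightarrow> u = 0" "\<mu> \<noteq> 0 \<Longrightarrow> norm u = norm y"
      "(transpose B ** B) *v u = \<mu> *\<^sub>R u"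
      "B *v y = sqrt \<mu> *\<^sub>R u" "B *v u = (- sqrt \<mu>) *\<^sub>R y"
      "R *v y = cos (sqrt \<mu>) *\<^sub>R y + sin (sqrt \<mu>) *\<^sub>R u"
    using valid_forms[OF skew eig R hR Py y] by blast
  define s where "s = sqrt \<mu>"
  have Ru: "R *v u = cos s *\<^sub>R u - sin s *\<^sub>R y"
  proof -
    have "B *v u = s *\<^sub>R (- y)" "B *v (- y) = (- s) *\<^sub>R u" using u(7,8) by (simp_all add: s_def vec.neg)
    from mexp_rot[OF this] show ?thesis using R by simp
  qed
  have st: "R *v (cos s *\<^sub>R y - sin s *\<^sub>R u) = cos s *\<^sub>R (R *v y) - sin s *\<^sub>R (R *v u)"
    by (simp add: vec.diff matrix_vector_mult_scaleR)
  have "R *v (cos s *\<^sub>R y - sin s *\<^sub>R u) = (cos s * cos s) *\<^sub>R y + (sin s * sin s) *\<^sub>R y"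
    unfolding st Ru u(9)[unfolded s_def[symmetric]]
    by (simp add: scaleR_add_right scaleR_diff_right scaleR_add_left algebra_simps power2_eq_square)
  also have "\<dots> = y" by (simp only: scaleR_add_left[symmetric] sin_cos_squared_add3 scaleR_one)
  finally have Rinv: "R *v (cos s *\<^sub>R y - sin s *\<^sub>R u) = y" .
  have RT: "transpose R *v y = cos s *\<^sub>R y - sin s *\<^sub>R u"
  proof -
    have "transpose R *v y = (transpose R ** R) *v (cos s *\<^sub>R y - sin s *\<^sub>R u)"
      by (subst Rinv[symmetric]) (simp add: matrix_vector_mul_assoc)
    thus ?thesis using orth by simp
  qed
  have Ry: "R *v y = cos s *\<^sub>R y + sin s *\<^sub>R u" using u(9) unfolding s_def .
  have half: "(1/2::real) *\<^sub>R (a + a) = a" for a :: "real^'n"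
    by (metis scaleR_add_left scaleR_add_right field_sum_of_halves scaleR_one)
  have "R *v y + transpose R *v y = cos s *\<^sub>R y + cos s *\<^sub>R y"
    unfolding Ry RT by simp
  hence "Cm R *v y = (1/2) *\<^sub>R (cos s *\<^sub>R y + cos s *\<^sub>R y)" unfolding Cm_v by (simp only:)
  hence "Cm R *v y = cos s *\<^sub>R y" by (simp only: half)
  moreover have "R *v y - transpose R *v y = sin s *\<^sub>R u + sin s *\<^sub>R u"
    unfolding Ry RT by simp
  hence "Km R *v y = (1/2) *\<^sub>R (sin s *\<^sub>R u + sin s *\<^sub>R u)" unfolding Km_v by (simp only:)
  hence "Km R *v y = sin s *\<^sub>R u" by (simp only: half)
  ultimately show ?thesis using that u(7,1,2,4) unfolding s_def by blast
qed

lemma valid_char: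
  assumes Cx: "Cm R *v x = c *\<^sub>R x"
  shows "B *v x = hc c *\<^sub>R (Km R *v x)"
proof -
  let ?P = "transpose B ** B"
  obtain M y where M: "finite M" "x = (\<Sum>\<mu>\<in>M. y \<mu>)" "\<And>\<mu>. \<mu> \<in> M \<Longrightarrow> ?P *v y \<mu> = \<mu> *\<^sub>R y \<mu>"
    using eig_decomp[OF sym_P[of B], of x] by blast
  have Cy: "Cm R *v y \<mu> = cos (sqrt \<mu>) *\<^sub>R y \<mu>" if "\<mu> \<in> M" for \<mu>
  proof (cases "y \<mu> = 0")
    case True then show ?thesis by simp
  next
    case False
    show ?thesis using valid_CK[OF M(3)[OF that] False] by metis
  qed
  define z where "z \<mu> = (cos (sqrt \<mu>) - c) *\<^sub>R y \<mu>" for \<mu>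
  have zsum: "(\<Sum>\<mu>\<in>M. z \<mu>) = 0"
  proof -
    have "(\<Sum>\<mu>\<in>M. z \<mu>) = (\<Sum>\<mu>\<in>M. Cm R *v y \<mu>) - c *\<^sub>R (\<Sum>\<mu>\<in>M. y \<mu>)"
      by (simp add: z_def Cy scaleR_diff_left sum_subtractf scaleR_sum_right)
    also have "\<dots> = 0" using Cx unfolding M(2) by (simp add: vec.sum)
    finally show ?thesis .
  qed
  have zorth: "pairwise (\<lambda>\<mu> \<nu>. orthogonal (z \<mu>) (z \<nu>)) M"
  proof (unfold pairwise_def orthogonal_def, intro ballI impI)
    fix \<mu> \<nu> assume "\<mu> \<in> M" "\<nu> \<in> M" "\<mu> \<noteq> \<nu>"
    hence "y \<mu> \<bullet> y \<nu> = 0" using eig_orth[OF sym_P M(3) M(3)] by blast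
    thus "z \<mu> \<bullet> z \<nu> = 0" by (simp add: z_def)
  qed
  have "(\<Sum>\<mu>\<in>M. (norm (z \<mu>))^2) = 0"
    using norm_sum_Pythagorean[OF M(1) zorth] zsum by simp
  hence z0: "z \<mu> = 0" if "\<mu> \<in> M" for \<mu>
    using sum_nonneg_eq_0_iff[OF M(1), of "\<lambda>\<mu>. (norm (z \<mu>))^2"] that by simp
  have By: "B *v y \<mu> = hc c *\<^sub>R (Km R *v y \<mu>)" if mu: "\<mu> \<in> M" for \<mu>
  proof (cases "y \<mu> = 0")
    case True then show ?thesis by simp
  next
    case False
    obtain u where u: "Cm R *v y \<mu> = cos (sqrt \<mu>) *\<^sub>R y \<mu>" "Km R *v y \<mu> = sin (sqrt \<mu>) *\<^sub>R u"
      "B *v y \<mu> = sqrt \<mu> *\<^sub>R u" "sqrt \<mu> < pi / 2" "0 \<le> \<mu>" "\<mu> = 0 \<Longrightarrow> u = 0"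
      using valid_CK[OF M(3)[OF mu] False] by blast
    have "c = cos (sqrt \<mu>)" using z0[OF mu] False by (simp add: z_def)
    hence "hc c * sin (sqrt \<mu>) = sqrt \<mu>" using hc_cos[of "sqrt \<mu>"] u(4,5) by simp
    thus ?thesis using u(2,3) by simp
  qed
  have "B *v x = (\<Sum>\<mu>\<in>M. B *v y \<mu>)" unfolding M(2) by (simp add: vec.sum)
  also have "\<dots> = (\<Sum>\<mu>\<in>M. hc c *\<^sub>R (Km R *v y \<mu>))" by (intro sum.cong refl By)
  also have "\<dots> = hc c *\<^sub>R (Km R *v x)" unfolding M(2) by (simp add: vec.sum scaleR_sum_right)
  finally show ?thesis .
qed

end

lemma onb_expand_mv:
  fixes A :: "real^'n^'n"
  assumes "finite T" "pairwise orthogonal T" "\<And>v. v \<in> T \<Longrightarrow> norm v = 1" "span T = UNIV"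
  shows "A *v x = (\<Sum>v\<in>T. (x \<bullet> v) *\<^sub>R (A *v v))"
proof -
  have "x = (\<Sum>v\<in>T. (x \<bullet> v) *\<^sub>R v)" using orthonormal_basis_expand[of T x] assms by auto
  hence "A *v x = A *v (\<Sum>v\<in>T. (x \<bullet> v) *\<^sub>R v)" by simp
  also have "\<dots> = (\<Sum>v\<in>T. (x \<bullet> v) *\<^sub>R (A *v v))" by (simp add: vec.sum matrix_vector_mult_scaleR)
  finally show ?thesis .
qed

lemma valid_unique:
  fixes R B1 B2 :: "real^'n^'n"
  assumes "transpose B1 = - B1" "\<forall>z. is_eigenvalue B1 z \<longrightarrow> cmod z < pi" "mexp B1 = R"
    and "transpose B2 = - B2" "\<forall>z. is_eigenvalue B2 z \<longrightarrow> cmod z < pi" "mexp B2 = R"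
    and hR: "opnorm2 (R - mat 1) < sqrt 2" and orth: "transpose R ** R = mat 1"
  shows "B1 = B2"
proof -
  obtain T where T: "finite T" "pairwise orthogonal T" "\<And>v. v \<in> T \<Longrightarrow> norm v = 1" "span T = UNIV"
    "\<And>v. v \<in> T \<Longrightarrow> Cm R *v v = (v \<bullet> (Cm R *v v)) *\<^sub>R v"
    using spectral_sym[OF Cm_sym[of R]] by blast
  have eq: "B1 *v v = B2 *v v" if "v \<in> T" for v
    using valid_char[OF assms(1-3) hR orth T(5)[OF that]] valid_char[OF assms(4-6) hR orth T(5)[OF that]]
    by simp
  show ?thesis unfolding matrix_eq
    using onb_expand_mv[OF T(1-4), of B1] onb_expand_mv[OF T(1-4), of B2] eq
    by (metis (no_types, lifting) sum.cong)
qed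



declare transpose_matrix_vector[simp del]

definition Hm :: "real^'n^'n \<Rightarrow> (real^'n) set \<Rightarrow> real^'n^'n" where
  "Hm R T = (\<chi> i j. \<Sum>v\<in>T. hc (v \<bullet> (Cm R *v v)) * v$i * v$j)"

definition B0 :: "real^'n^'n \<Rightarrow> (real^'n) set \<Rightarrow> real^'n^'n" where
  "B0 R T = Km R ** Hm R T"

lemma outer_sum_v: "((\<chi> i j. \<Sum>v\<in>T. f v * v$i * v$j) :: real^'n^'n) *v x = (\<Sum>v\<in>T. (f v * (v \<bullet> x)) *\<^sub>R v)"
proof -
  have "((\<chi> i j. \<Sum>v\<in>T. f v * v$i * v$j) *v x) $ i = (\<Sum>v\<in>T. (f v * (v \<bullet> x)) *\<^sub>R v) $ i" for i
  proof -
    have "((\<chi> i j. \<Sum>v\<in>T. f v * v$i * v$j) *v x) $ i = (\<Sum>j\<in>UNIV. \<Sum>v\<in>T. f v * v$i * v$j * x$j)"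
      by (simp add: matrix_vector_mult_def sum_distrib_right)
    also have "\<dots> = (\<Sum>v\<in>T. \<Sum>j\<in>UNIV. f v * v$i * v$j * x$j)" by (rule sum.swap)
    also have "\<dots> = (\<Sum>v\<in>T. (f v * (v \<bullet> x)) * v $ i)"
      by (simp add: inner_vec_def sum_distrib_left sum_distrib_right mult_ac)
    finally show ?thesis by (simp add: sum_component)
  qed
  thus ?thesis by (simp add: vec_eq_iff)
qed
lemma Hm_v: "Hm R T *v x = (\<Sum>v\<in>T. (hc (v \<bullet> (Cm R *v v)) * (v \<bullet> x)) *\<^sub>R v)"
  unfolding Hm_def by (rule outer_sum_v)

lemma dot_transpose2: "x \<bullet> (transpose A *v y) = ((A::real^'n^'n) *v x) \<bullet> y"
  by (metis dot_transpose inner_commute)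

lemma Hm_sym: "transpose (Hm R T) = Hm R T"
  by (simp add: Hm_def transpose_def vec_eq_iff mult_ac)

context
  fixes R :: "real^'n^'n" and T :: "(real^'n) set"
  assumes o1: "transpose R ** R = mat 1" and o2: "R ** transpose R = mat 1"
    and hR: "opnorm2 (R - mat 1) < sqrt 2"
    and T: "finite T" "pairwise orthogonal T" "\<And>v. v \<in> T \<Longrightarrow> norm v = 1" "span T = UNIV"
       "\<And>v. v \<in> T \<Longrightarrow> Cm R *v v = (v \<bullet> (Cm R *v v)) *\<^sub>R v"
begin

lemma RRT: "R *v (transpose R *v x) = x" using o2 by (simp add: matrix_vector_mul_assoc)
lemma RTR: "transpose R *v (R *v x) = x" using o1 by (simp add: matrix_vector_mul_assoc)

lemma normR: "norm (R *v x) = norm x"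
proof -
  have "(R *v x) \<bullet> (R *v x) = x \<bullet> x" using dot_transpose2[of x R "R *v x"] RTR by simp
  thus ?thesis by (metis norm_eq_sqrt_inner)
qed

lemma k1: "R *v (Km R *v x) = (1/2) *\<^sub>R (R *v (R *v x) - x)"
  by (simp add: Km_v vec.diff matrix_vector_mult_scaleR RRT)
lemma k2: "transpose R *v (Km R *v x) = (1/2) *\<^sub>R (x - transpose R *v (transpose R *v x))"
  by (simp add: Km_v vec.diff matrix_vector_mult_scaleR RTR)
lemma c1: "R *v (Cm R *v x) = (1/2) *\<^sub>R (R *v (R *v x) + x)"
  by (simp add: Cm_v vec.add matrix_vector_mult_scaleR RRT)
lemma c2: "transpose R *v (Cm R *v x) = (1/2) *\<^sub>R (x + transpose R *v (transpose R *v x))"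
  by (simp add: Cm_v vec.add matrix_vector_mult_scaleR RTR)

lemma gen_id1: "(1/2::real) *\<^sub>R ((1/2) *\<^sub>R (a - x) + (1/2) *\<^sub>R (x - b)) =
    (1/2) *\<^sub>R ((1/2) *\<^sub>R (a + x) - (1/2) *\<^sub>R (x + b))" for a x b :: "'a::real_vector"
  by (simp add: algebra_simps)
lemma gen_id2: "(1/2::real) *\<^sub>R ((1/2) *\<^sub>R (a - x) - (1/2) *\<^sub>R (x - b)) =
    (1/2) *\<^sub>R ((1/2) *\<^sub>R (a + x) + (1/2) *\<^sub>R (x + b)) - x" for a x b :: "'a::real_vector"
proof -
  have "x = (1/2::real) *\<^sub>R ((1/2) *\<^sub>R x + (1/2) *\<^sub>R x) + (1/2::real) *\<^sub>R ((1/2) *\<^sub>R x + (1/2) *\<^sub>R x)"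
    by (simp add: scaleR_add_left[symmetric] scaleR_add_right[symmetric])
  thus ?thesis by (simp add: algebra_simps)
qed

lemma CK_comm: "Cm R *v (Km R *v x) = Km R *v (Cm R *v x)"
  unfolding Cm_v[of R "Km R *v x"] Km_v[of R "Cm R *v x"] k1 k2 c1 c2 by (rule gen_id1)

lemma KK: "Km R *v (Km R *v x) = Cm R *v (Cm R *v x) - x"
  unfolding Km_v[of R "Km R *v x"] Cm_v[of R "Cm R *v x"] k1 k2 c1 c2 by (rule gen_id2)

lemma R_CK: "R *v x = Cm R *v x + Km R *v x"
proof -
  have "Cm R *v x + Km R *v x = (1/2) *\<^sub>R (R *v x + R *v x)"
    unfolding Cm_v Km_v by (simp add: algebra_simps)
  also have "\<dots> = R *v x" by (metis scaleR_add_left scaleR_add_right field_sum_of_halves scaleR_one)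
  finally show ?thesis by simp
qed

definition "cv v = v \<bullet> (Cm R *v v)"

lemma cv_range: assumes "v \<in> T" shows "0 < cv v" "cv v \<le> 1"
proof -
  have nv: "norm v = 1" using T(3) assms .
  have "v \<bullet> (transpose R *v v) = (R *v v) \<bullet> v" by (rule dot_transpose2)
  hence cvR: "cv v = v \<bullet> (R *v v)" unfolding cv_def Cm_v by (simp add: inner_add_right inner_commute)
  have "v \<bullet> (R *v v) \<le> norm v * norm (R *v v)" by (rule norm_cauchy_schwarz)
  thus "cv v \<le> 1" using nv normR cvR by simp
  have RvRv: "(R *v v) \<bullet> (R *v v) = 1" using normR[of v] nv by (metis norm_eq_1)
  have vv: "v \<bullet> v = 1" using nv by (simp add: norm_eq_1)
  have "(norm ((R - mat 1) *v v))^2 = (R *v v - v) \<bullet> (R *v v - v)"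
    by (simp add: power2_norm_eq_inner matrix_vector_mult_diff_rdistrib)
  also have "\<dots> = (R *v v) \<bullet> (R *v v) - 2 * (v \<bullet> (R *v v)) + v \<bullet> v"
    by (simp add: inner_diff_left inner_diff_right inner_commute)
  also have "\<dots> = 2 - 2 * cv v" using RvRv vv cvR by simp
  finally have "(norm ((R - mat 1) *v v))^2 = 2 - 2 * cv v" .
  moreover have "norm ((R - mat 1) *v v) < sqrt 2"
    using mv_bound[of "R - mat 1" v] hR nv by simp
  hence "(norm ((R - mat 1) *v v))^2 < 2"
    by (metis norm_ge_zero power_strict_mono real_sqrt_pow2 zero_le_numeral zero_less_numeral pos2)
  ultimately show "0 < cv v" by simp
qed


lemma Cv: "v \<in> T \<Longrightarrow> Cm R *v v = cv v *\<^sub>R v" using T(5) unfolding cv_def by blast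

lemma H_eig:
  assumes Cw: "Cm R *v w = c *\<^sub>R w"
  shows "Hm R T *v w = hc c *\<^sub>R w"
proof -
  have "Hm R T *v w = (\<Sum>v\<in>T. (hc (cv v) * (v \<bullet> w)) *\<^sub>R v)" unfolding Hm_v cv_def ..
  also have "\<dots> = (\<Sum>v\<in>T. (hc c * (w \<bullet> v)) *\<^sub>R v)"
  proof (intro sum.cong refl)
    fix v assume v: "v \<in> T"
    show "(hc (cv v) * (v \<bullet> w)) *\<^sub>R v = (hc c * (w \<bullet> v)) *\<^sub>R v"
    proof (cases "cv v = c")
      case True then show ?thesis by (simp add: inner_commute)
    next
      case False
      hence "v \<bullet> w = 0" using eig_orth[OF Cm_sym Cv[OF v] Cw] by blast
      thus ?thesis by (simp add: inner_commute)
    qed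
  qed
  also have "\<dots> = hc c *\<^sub>R (\<Sum>v\<in>T. (w \<bullet> v) *\<^sub>R v)" by (simp add: scaleR_sum_right)
  also have "(\<Sum>v\<in>T. (w \<bullet> v) *\<^sub>R v) = w" using orthonormal_basis_expand[of T w] T by auto
  finally show ?thesis .
qed

lemma HKv: "v \<in> T \<Longrightarrow> Hm R T *v (Km R *v v) = hc (cv v) *\<^sub>R (Km R *v v)"
  by (rule H_eig) (simp add: CK_comm Cv matrix_vector_mult_scaleR)

lemma Hv: "v \<in> T \<Longrightarrow> Hm R T *v v = hc (cv v) *\<^sub>R v"
  by (rule H_eig[OF Cv])

lemma B0v: "v \<in> T \<Longrightarrow> B0 R T *v v = hc (cv v) *\<^sub>R (Km R *v v)"
  by (simp add: B0_def matrix_vector_mul_assoc[symmetric] Hv matrix_vector_mult_scaleR)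

lemma hc_sq:
  fixes c :: real
  shows "0 < c \<Longrightarrow> c \<le> 1 \<Longrightarrow> (hc c) ^ 2 * (c ^ 2 - 1) = - ((arccos c) ^ 2)"
proof (cases "c = 1")
  case True then show ?thesis by (simp add: hc_def)
next
  case False
  assume "0 < c" "c \<le> 1"
  hence "c^2 < 1" using False by (simp add: power_less_one_iff abs_square_less_1)
  hence p: "0 < 1 - c^2" by simp
  have "(hc c)^2 = (arccos c)^2 / (1 - c^2)" using p by (simp add: hc_def power_divide)
  thus ?thesis using p by (simp add: field_simps)
qed

lemma theta_range:
  assumes "v \<in> T"
  shows "0 \<le> arccos (cv v)" "arccos (cv v) < pi / 2" "cos (arccos (cv v)) = cv v"
proof -
  have c: "0 < cv v" "cv v \<le> 1" using cv_range[OF assms] by auto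
  show "0 \<le> arccos (cv v)" using c by (intro arccos_lbound) auto
  show cc: "cos (arccos (cv v)) = cv v" using c by (intro cos_arccos) auto
  show "arccos (cv v) < pi / 2"
  proof (rule ccontr)
    assume "\<not> arccos (cv v) < pi / 2"
    moreover have "arccos (cv v) \<le> pi" using c by (intro arccos_ubound) auto
    ultimately have "cos (arccos (cv v)) \<le> cos (pi / 2)" by (intro cos_monotone_0_pi_le) auto
    thus False using cc c by simp
  qed
qed

lemma B0B0v:
  assumes v: "v \<in> T"
  shows "B0 R T *v (B0 R T *v v) = (- ((arccos (cv v))^2)) *\<^sub>R v"
proof -
  have "B0 R T *v (B0 R T *v v) = Km R *v (Hm R T *v (hc (cv v) *\<^sub>R (Km R *v v)))"
    unfolding B0v[OF v] by (simp add: B0_def matrix_vector_mul_assoc[symmetric])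
  also have "Hm R T *v (hc (cv v) *\<^sub>R (Km R *v v)) = (hc (cv v) * hc (cv v)) *\<^sub>R (Km R *v v)"
    by (simp add: matrix_vector_mult_scaleR HKv[OF v])
  also have "Km R *v ((hc (cv v) * hc (cv v)) *\<^sub>R (Km R *v v)) = ((hc (cv v))^2) *\<^sub>R (Km R *v (Km R *v v))"
    by (simp add: matrix_vector_mult_scaleR power2_eq_square)
  also have "Km R *v (Km R *v v) = ((cv v)^2 - 1) *\<^sub>R v"
    unfolding KK by (simp add: Cv[OF v] matrix_vector_mult_scaleR power2_eq_square algebra_simps)
  finally show ?thesis using hc_sq[of "cv v"] cv_range[OF v] by simp
qed

lemma Kv_zero:
  assumes v: "v \<in> T" and c1: "cv v = 1"
  shows "Km R *v v = 0"
proof -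
  have "(Km R *v v) \<bullet> (Km R *v v) = - (v \<bullet> (Km R *v (Km R *v v)))"
    by (rule skew_dot[OF Km_skew])
  also have "Km R *v (Km R *v v) = 0" unfolding KK by (simp add: Cv[OF v] c1 matrix_vector_mult_scaleR)
  finally show ?thesis by simp
qed

lemma mexp_B0_v:
  assumes v: "v \<in> T"
  shows "mexp (B0 R T) *v v = R *v v"
proof -
  define th where "th = arccos (cv v)"
  have th: "0 \<le> th" "th < pi / 2" "cos th = cv v" using theta_range[OF v] unfolding th_def by auto
  have Rv: "R *v v = cv v *\<^sub>R v + Km R *v v" using R_CK[of v] Cv[OF v] by simp
  show ?thesis
  proof (cases "th = 0")
    case True
    hence c1: "cv v = 1" using th by simp
    have K0: "Km R *v v = 0" by (rule Kv_zero[OF v c1])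
    have "B0 R T *v v = 0 *\<^sub>R 0" "B0 R T *v 0 = (- 0) *\<^sub>R v" using B0v[OF v] K0 by simp_all
    from mexp_rot[OF this] show ?thesis using Rv c1 K0 by simp
  next
    case False
    hence tp: "0 < th" using th by simp
    define u where "u = (1 / th) *\<^sub>R (B0 R T *v v)"
    have r1: "B0 R T *v v = th *\<^sub>R u" using tp by (simp add: u_def)
    have r2: "B0 R T *v u = (- th) *\<^sub>R v"
      using tp B0B0v[OF v] unfolding u_def th_def[symmetric] by (simp add: matrix_vector_mult_scaleR power2_eq_square)
    have "mexp (B0 R T) *v v = cos th *\<^sub>R v + sin th *\<^sub>R u" by (rule mexp_rot[OF r1 r2])
    also have "sin th *\<^sub>R u = Km R *v v"
    proof -
      have "hc (cos th) * sin th = th" by (rule hc_cos[OF th(1,2)])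
      hence "sin th * hc (cv v) = th" using th(3) by (simp add: mult.commute)
      thus ?thesis using tp unfolding u_def B0v[OF v] by simp
    qed
    finally show ?thesis using Rv th(3) by simp
  qed
qed

lemma mexp_B0: "mexp (B0 R T) = R"
  unfolding matrix_eq
  using onb_expand_mv[OF T(1-4), of "mexp (B0 R T)"] onb_expand_mv[OF T(1-4), of R] mexp_B0_v
  by (metis (no_types, lifting) sum.cong)

lemma HK_comm: "Hm R T ** Km R = Km R ** Hm R T"
proof -
  have "(Hm R T ** Km R) *v v = (Km R ** Hm R T) *v v" if v: "v \<in> T" for v
    by (simp add: matrix_vector_mul_assoc[symmetric] HKv[OF v] Hv[OF v] matrix_vector_mult_scaleR)
  thus ?thesis unfolding matrix_eq
    using onb_expand_mv[OF T(1-4), of "Hm R T ** Km R"] onb_expand_mv[OF T(1-4), of "Km R ** Hm R T"]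
    by (metis (no_types, lifting) sum.cong)
qed

lemma B0_skew: "transpose (B0 R T) = - B0 R T"
proof -
  have "transpose (B0 R T) = Hm R T ** (- Km R)"
    by (simp add: B0_def matrix_transpose_mul Hm_sym Km_skew)
  also have "\<dots> = - (Hm R T ** Km R)"
    by (simp add: matrix_eq matrix_vector_mul_assoc[symmetric] neg_mv vec.neg)
  finally show ?thesis by (simp add: HK_comm B0_def)
qed

lemma B0_bound: "norm (B0 R T *v x) \<le> (pi / 2) * norm (mat 1 *v x)"
proof (rule compare_norm[OF sym_P[of "B0 R T"]])
  let ?B = "B0 R T"
  let ?P = "transpose ?B ** ?B"
  have Pv: "?P *v x = - (?B *v (?B *v x))" for x by (rule skew_P[OF B0_skew])
  fix y \<mu> assume Py: "?P *v y = \<mu> *\<^sub>R y"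
  have "?P *v (?B *v y) = ?B *v (?P *v y)" unfolding Pv by (simp add: vec.neg)
  also have "\<dots> = \<mu> *\<^sub>R (?B *v y)" using Py by (simp add: matrix_vector_mult_scaleR)
  finally have P1: "?P *v (?B *v y) = \<mu> *\<^sub>R (?B *v y)" .
  have nB: "(?B *v y) \<bullet> (?B *v y) = \<mu> * (y \<bullet> y)"
    using dot_transpose2[of y ?B "?B *v y"] Py by (simp add: matrix_vector_mul_assoc)
  have "(norm (?B *v y))^2 \<le> (pi / 2 * norm y)^2"
  proof (cases "y = 0")
    case True then show ?thesis by simp
  next
    case False
    have "\<exists>w\<in>T. w \<bullet> y \<noteq> 0"
    proof (rule ccontr)
      assume "\<not> (\<exists>w\<in>T. w \<bullet> y \<noteq> 0)"
      hence "(\<Sum>v\<in>T. (y \<bullet> v) *\<^sub>R v) = 0" by (simp add: inner_commute)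
      moreover have "(\<Sum>v\<in>T. (y \<bullet> v) *\<^sub>R v) = y" using orthonormal_basis_expand[of T y] T by auto
      ultimately show False using False by simp
    qed
    then obtain w where w: "w \<in> T" "w \<bullet> y \<noteq> 0" by blast
    have "\<mu> * (w \<bullet> y) = w \<bullet> (?P *v y)" using Py by simp
    also have "\<dots> = (?P *v w) \<bullet> y" using sym_dot[OF sym_P[of ?B], of w y] by simp
    also have "?P *v w = (arccos (cv w))^2 *\<^sub>R w" unfolding Pv B0B0v[OF w(1)] by simp
    finally have "\<mu> = (arccos (cv w))^2" using w(2) by simp
    moreover have "(arccos (cv w))^2 \<le> (pi/2)^2"
      using theta_range[OF w(1)] by (intro power_mono) auto
    ultimately have "\<mu> \<le> (pi/2)^2" by simp
    hence "\<mu> * (y \<bullet> y) \<le> (pi/2)^2 * (y \<bullet> y)" by (intro mult_right_mono) auto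
    moreover have "(norm (?B *v y))^2 = \<mu> * (y \<bullet> y)" using nB by (simp add: power2_norm_eq_inner)
    moreover have "(pi / 2 * norm y)^2 = (pi/2)^2 * (y \<bullet> y)"
      by (simp only: power_mult_distrib power2_norm_eq_inner)
    ultimately show ?thesis by simp
  qed
  hence "norm (?B *v y) \<le> pi / 2 * norm y"
    by (rule power2_le_imp_le) simp
  thus "?P *v (?B *v y) = \<mu> *\<^sub>R (?B *v y) \<and> ?P *v (mat 1 *v y) = \<mu> *\<^sub>R (mat 1 *v y) \<and>
        norm (?B *v y) \<le> pi / 2 * norm (mat 1 *v y)"
    using P1 Py by simp
qed simp

lemma B0_eig: "is_eigenvalue (B0 R T) z \<Longrightarrow> cmod z < pi"
proof -
  assume "is_eigenvalue (B0 R T) z"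
  hence "cmod z \<le> pi / 2" by (rule eig_bound) (use B0_bound in auto)
  thus "cmod z < pi" using pi_gt_zero by linarith
qed

end



lemma matrix_inv_props:
  assumes "invertible (A::real^'n^'n)"
  shows "A ** matrix_inv A = mat 1" "matrix_inv A ** A = mat 1"
proof -
  have "\<exists>A'. A ** A' = mat 1 \<and> A' ** A = mat 1" using assms unfolding invertible_def .
  hence "A ** matrix_inv A = mat 1 \<and> matrix_inv A ** A = mat 1"
    unfolding matrix_inv_def by (rule someI_ex)
  thus "A ** matrix_inv A = mat 1" "matrix_inv A ** A = mat 1" by auto
qed

theorem mainTheorem11:
  fixes \<tau> :: "real^'d" and R :: "real^'d^'d"
  assumes "orthogonal_matrix R"
    and "opnorm2 (R - mat 1) < sqrt 2"
  shows "(\<exists>!B. skew_symmetric B \<and> (\<forall>z. is_eigenvalue B z \<longrightarrow> cmod z < pi) \<and> mexp B = R)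
    \<and> (\<forall>B. skew_symmetric B \<and> (\<forall>z. is_eigenvalue B z \<longrightarrow> cmod z < pi) \<and> mexp B = R \<longrightarrow>
          opnorm2 B \<le> pi / 2
        \<and> invertible (Jmat B)
        \<and> (let \<tau>0' = matrix_inv (Jmat B) *v \<tau> in
             opnorm2 (R - mat 1) + norm \<tau> \<le> opnorm2 B + norm \<tau>0'
           \<and> opnorm2 B + norm \<tau>0' \<le> pi / 2 * (opnorm2 (R - mat 1) + norm \<tau>)))"
proof -
  have o1: "transpose R ** R = mat 1" and o2: "R ** transpose R = mat 1"
    using assms(1) unfolding orthogonal_matrix_def by auto
  have hR: "opnorm2 (R - mat 1) < sqrt 2" by (rule assms(2))
  obtain T where T: "finite T" "pairwise orthogonal T" "\<And>v. v \<in> T \<Longrightarrow> norm v = 1" "span T = UNIV"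
    "\<And>v. v \<in> T \<Longrightarrow> Cm R *v v = (v \<bullet> (Cm R *v v)) *\<^sub>R v"
    using spectral_sym[OF Cm_sym[of R]] by blast
  have ex: "skew_symmetric (B0 R T) \<and> (\<forall>z. is_eigenvalue (B0 R T) z \<longrightarrow> cmod z < pi) \<and> mexp (B0 R T) = R"
    unfolding skew_symmetric_def
    using B0_skew[OF o1 o2 hR T] B0_eig[OF o1 o2 hR T] mexp_B0[OF o1 o2 hR T] by blast
  have uq: "B1 = B2" if "skew_symmetric B1 \<and> (\<forall>z. is_eigenvalue B1 z \<longrightarrow> cmod z < pi) \<and> mexp B1 = R"
    "skew_symmetric B2 \<and> (\<forall>z. is_eigenvalue B2 z \<longrightarrow> cmod z < pi) \<and> mexp B2 = R" for B1 B2
    using that valid_unique[OF _ _ _ _ _ _ hR o1, of B1 B2] unfolding skew_symmetric_def by blast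
  have part2: "opnorm2 B \<le> pi / 2
        \<and> invertible (Jmat B)
        \<and> (let \<tau>0' = matrix_inv (Jmat B) *v \<tau> in
             opnorm2 (R - mat 1) + norm \<tau> \<le> opnorm2 B + norm \<tau>0'
           \<and> opnorm2 B + norm \<tau>0' \<le> pi / 2 * (opnorm2 (R - mat 1) + norm \<tau>))"
    if vB: "skew_symmetric B \<and> (\<forall>z. is_eigenvalue B z \<longrightarrow> cmod z < pi) \<and> mexp B = R" for B
  proof -
    have skew: "transpose B = - B" and eig: "\<forall>z. is_eigenvalue B z \<longrightarrow> cmod z < pi" and RB: "mexp B = R"
      using vB unfolding skew_symmetric_def by auto
    note c1 = cmp1[OF skew eig RB hR] and c2 = cmp2[OF skew eig RB hR] and c3 = cmp3[OF skew eig RB hR]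
      and c4 = cmp4[OF skew eig RB hR] and c5 = cmp5[OF skew eig RB hR]
    have pi0: "0 \<le> pi / 2" by simp
    have nB: "opnorm2 B \<le> pi / 2"
      by (rule opnorm2_le[OF pi0]) (use c3 in simp)
    have inj: "inj ((*v) (Jmat B))"
      unfolding vec.inj_iff_eq_0
    proof (intro allI impI)
      fix x assume "Jmat B *v x = 0"
      hence "norm x \<le> 0" using c5[of x] by simp
      thus "x = 0" by simp
    qed
    have inv: "invertible (Jmat B)"
      using inj matrix_left_invertible_injective invertible_left_inverse by blast
    define t where "t = matrix_inv (Jmat B) *v \<tau>"
    have Jt: "Jmat B *v t = \<tau>"
      unfolding t_def matrix_vector_mul_assoc matrix_inv_props(1)[OF inv] by simp
    have i1: "opnorm2 (R - mat 1) \<le> opnorm2 B"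
      by (rule opnorm2_le[OF opnorm2_nonneg]) (use c1 mv_bound order_trans in fastforce)
    have i2: "norm \<tau> \<le> norm t" using c4[of t] Jt by simp
    have i3: "opnorm2 B \<le> pi / 2 * opnorm2 (R - mat 1)"
    proof (rule opnorm2_le)
      show "0 \<le> pi / 2 * opnorm2 (R - mat 1)" by (simp add: opnorm2_nonneg)
      fix x
      have "norm (B *v x) \<le> pi / 2 * norm ((R - mat 1) *v x)" by (rule c2)
      also have "\<dots> \<le> pi / 2 * (opnorm2 (R - mat 1) * norm x)"
        by (intro mult_left_mono mv_bound) simp
      finally show "norm (B *v x) \<le> pi / 2 * opnorm2 (R - mat 1) * norm x" by (simp add: mult.assoc)
    qed
    have i4: "norm t \<le> pi / 2 * norm \<tau>" using c5[of t] Jt by simp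
    show ?thesis
      unfolding Let_def t_def[symmetric]
      using nB inv i1 i2 i3 i4 by (simp add: distrib_left)
  qed
  show ?thesis
  proof (intro conjI allI impI)
    show "\<exists>!B. skew_symmetric B \<and> (\<forall>z. is_eigenvalue B z \<longrightarrow> cmod z < pi) \<and> mexp B = R"
      using ex uq by blast
  qed (use part2 in blast)+
qed


end
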